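(* For $(a,b)\in\mathscr T^q$ the following are equivalent: (1) $(a,b)$ is periodic for $\mathrm{BCZ}_q$, i.e. $\mathrm{BCZ}_q^n(a,b)=(a,b)$ for some $n\ge1$; (2) there exists $s_0>0$ with $h_{s_0}g_{a,b}\Lambda_q=g_{a,b}\Lambda_q$; (3) $b/a=x/y$ for some $(x,y)^T\in\Lambda_q$ with $y\neq0$ (equivalently, since $\Lambda_q$ is symmetric about $y=x$, $b/a$ is the slope of some vector of $\Lambda_q$).
   Context: Fix an integer $q\ge3$, let $\lambda_q=2\cos(\pi/q)$, and let $G_q\subset \mathrm{SL}(2,\mathbb R)$ be the Hecke triangle group generated by $S=\begin{pmatrix}0&-1\\1&0\end{pmatrix}$ and $T_q=\begin{pmatrix}1&\lambda_q\\0&1\end{pmatrix}$, acting linearly on $\mathbb R^2$; $\Lambda_q=G_q(1,0)^T$, $A\Lambda_q=\{A\mathbf v:\mathbf v\in\Lambda_q\}$. $h_s=\begin{pmatrix}1&0\\-s&1\end{pmatrix}$, $g_{a,b}=\begin{pmatrix}a&b\\0&a^{-1}\end{pmatrix}$, $S_1=\{(x,y)^T:0<x\le1\}$. The $G_q$-Farey triangle is $\mathscr T^q=\{(a,b):0<a\le1,\ 1-\lambda_qa<b\le1\}$. Facts (established earlier in the paper): for every $(a,b)\in\mathscr T^q$, $g_{a,b}\Lambda_q\cap S_1$ contains a vector of smallest positive slope, denoted $R_q(a,b)$; and whenever $A\Lambda_q$ contains a horizontal vector $(c,0)^T$ with $0<c\le1$ there is a unique $(a',b')\in\mathscr T^q$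 with $A\Lambda_q=g_{a',b'}\Lambda_q$. The $G_q$-BCZ map $\mathrm{BCZ}_q:\mathscr T^q\to\mathscr T^q$ sends $(a,b)$ to the unique $(c,d)\in\mathscr T^q$ with $h_{R_q(a,b)}g_{a,b}\Lambda_q=g_{c,d}\Lambda_q$. *)

theory Defs
  imports "HOL-Analysis.Analysis"
begin

definition mat2 :: "real \<Rightarrow> real \<Rightarrow> real \<Rightarrow> real \<Rightarrow> real^2^2" where
  "mat2 a b c d = (\<chi> i j. if i = 1 then (if j = 1 then a else b) else (if j = 1 then c else d))"

definition vec2 :: "real \<Rightarrow> real \<Rightarrow> real^2" where
  "vec2 x y = (\<chi> i. if i = 1 then x else y)"

definition lambda_q :: "nat \<Rightarrow> real" where
  "lambda_q q = 2 * cos (pi / real q)"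

definition S_mat :: "real^2^2" where "S_mat = mat2 0 (-1) 1 0"

definition T_mat :: "nat \<Rightarrow> real^2^2" where "T_mat q = mat2 1 (lambda_q q) 0 1"

inductive_set G_q :: "nat \<Rightarrow> (real^2^2) set" for q :: nat where
  G_id: "mat 1 \<in> G_q q"
| G_S: "M \<in> G_q q \<Longrightarrow> S_mat ** M \<in> G_q q"
| G_Sinv: "M \<in> G_q q \<Longrightarrow> matrix_inv S_mat ** M \<in> G_q q"
| G_T: "M \<in> G_q q \<Longrightarrow> T_mat q ** M \<in> G_q q"
| G_Tinv: "M \<in> G_q q \<Longrightarrow> matrix_inv (T_mat q) ** M \<in> G_q q"

definition Lambda_q :: "nat \<Rightarrow> (real^2) set" where
  "Lambda_q q = {M *v vec2 1 0 | M. M \<in> G_q q}"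

definition mat_img :: "real^2^2 \<Rightarrow> (real^2) set \<Rightarrow> (real^2) set" where
  "mat_img A L = (\<lambda>v. A *v v) ` L"

definition h_mat :: "real \<Rightarrow> real^2^2" where "h_mat s = mat2 1 0 (-s) 1"

definition g_mat :: "real \<Rightarrow> real \<Rightarrow> real^2^2" where "g_mat a b = mat2 a b 0 (inverse a)"

definition S1 :: "(real^2) set" where "S1 = {v. 0 < v$1 \<and> v$1 \<le> 1}"

definition farey_tri :: "nat \<Rightarrow> (real \<times> real) set" where
  "farey_tri q = {(a, b). 0 < a \<and> a \<le> 1 \<and> 1 - lambda_q q * a < b \<and> b \<le> 1}"

definition pos_slopes :: "nat \<Rightarrow> real \<Rightarrow> real \<Rightarrow> real set" where
  "pos_slopes q a b = {v$2 / v$1 | v. v \<in> mat_img (g_mat a b) (Lambda_q q) \<inter> S1 \<and> v$2 / v$1 > 0}"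

text \<open>R_q(a,b): the smallest positive slope (its existence is a fact from the paper).\<close>
definition R_q :: "nat \<Rightarrow> real \<Rightarrow> real \<Rightarrow> real" where
  "R_q q a b = (THE s. s \<in> pos_slopes q a b \<and> (\<forall>t \<in> pos_slopes q a b. s \<le> t))"

definition BCZ_q :: "nat \<Rightarrow> real \<times> real \<Rightarrow> real \<times> real" where
  "BCZ_q q p = (case p of (a, b) \<Rightarrow>
     (THE cd. cd \<in> farey_tri q \<and>
        mat_img (h_mat (R_q q a b) ** g_mat a b) (Lambda_q q)
          = mat_img (g_mat (fst cd) (snd cd)) (Lambda_q q)))"

end

theory Submission
  imports Defs
begin

lemma vec2_nth[simp]: "vec2 x y $ 1 = x" "vec2 x y $ 2 = y"
  by (simp_all add: vec2_def)

lemma vec2_eta: "v = vec2 (v$1) (v$2)"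
  by (simp add: vec_eq_iff forall_2)

lemma vec2_eq_iff: "vec2 x y = vec2 x' y' \<longleftrightarrow> x = x' \<and> y = y'"
  by (auto simp: vec_eq_iff forall_2)

lemma mat2_nth[simp]: "mat2 a b c d $ 1 $ 1 = a" "mat2 a b c d $ 1 $ 2 = b"
   "mat2 a b c d $ 2 $ 1 = c" "mat2 a b c d $ 2 $ 2 = d"
  by (simp_all add: mat2_def)

lemma mat2_eta: "M = mat2 (M$1$1) (M$1$2) (M$2$1) (M$2$2)"
  by (simp add: vec_eq_iff forall_2)

lemma mat2_mult: "mat2 a b c d ** mat2 e f g h = mat2 (a*e+b*g) (a*f+b*h) (c*e+d*g) (c*f+d*h)"
  by (simp add: vec_eq_iff forall_2 matrix_matrix_mult_def sum_2)

lemma mat2_vec: "mat2 a b c d *v vec2 x y = vec2 (a*x+b*y) (c*x+d*y)"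
  by (simp add: vec_eq_iff forall_2 matrix_vector_mult_def sum_2)

lemma mat1_2: "(mat 1 :: real^2^2) = mat2 1 0 0 1"
  by (simp add: vec_eq_iff forall_2 mat_def)

definition Sinv :: "real^2^2" where "Sinv = mat2 0 1 (-1) 0"
definition Tinv :: "nat \<Rightarrow> real^2^2" where "Tinv q = mat2 1 (- lambda_q q) 0 1"
definition adj :: "real^2^2 \<Rightarrow> real^2^2" where
  "adj M = mat2 (M$2$2) (-(M$1$2)) (-(M$2$1)) (M$1$1)"
definition Dm :: "real^2^2" where "Dm = mat2 (-1) 0 0 1"

lemma inv_unique:
  fixes A X :: "real^2^2"
  assumes "A ** X = mat 1" "X ** A = mat 1"
  shows "matrix_inv A = X"
proof -
  have "\<exists>Y. A ** Y = mat 1 \<and> Y ** A = mat 1" using assms by blast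
  then have Y: "A ** matrix_inv A = mat 1" "matrix_inv A ** A = mat 1"
    unfolding matrix_inv_def by (metis (mono_tags, lifting) someI_ex)+
  have "matrix_inv A = matrix_inv A ** (A ** X)" using assms by (simp add: matrix_mul_rid)
  also have "\<dots> = (matrix_inv A ** A) ** X" by (simp add: matrix_mul_assoc)
  also have "\<dots> = X" using Y by (simp add: matrix_mul_lid)
  finally show ?thesis .
qed

lemma Sinv_eq: "matrix_inv S_mat = Sinv"
  by (rule inv_unique) (simp_all add: S_mat_def Sinv_def mat2_mult mat1_2)

lemma Tinv_eq: "matrix_inv (T_mat q) = Tinv q"
  by (rule inv_unique) (simp_all add: T_mat_def Tinv_def mat2_mult mat1_2)

lemma G_mult: "M \<in> G_q q \<Longrightarrow> N \<in> G_q q \<Longrightarrow> M ** N \<in> G_q q"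
proof (induction M rule: G_q.induct)
  case G_id then show ?case by (simp add: matrix_mul_lid)
next
  case (G_S M) then show ?case by (metis G_q.G_S matrix_mul_assoc)
next
  case (G_Sinv M) then show ?case by (metis G_q.G_Sinv matrix_mul_assoc)
next
  case (G_T M) then show ?case by (metis G_q.G_T matrix_mul_assoc)
next
  case (G_Tinv M) then show ?case by (metis G_q.G_Tinv matrix_mul_assoc)
qed

lemma S_in: "S_mat \<in> G_q q" using G_q.G_S[OF G_q.G_id, of q] by (simp add: matrix_mul_rid)
lemma Sinv_in: "Sinv \<in> G_q q" using G_q.G_Sinv[OF G_q.G_id, of q] by (simp add: matrix_mul_rid Sinv_eq)
lemma T_in: "T_mat q \<in> G_q q" using G_q.G_T[OF G_q.G_id, of q] by (simp add: matrix_mul_rid)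
lemma Tinv_in: "Tinv q \<in> G_q q" using G_q.G_Tinv[OF G_q.G_id, of q] by (simp add: matrix_mul_rid Tinv_eq)

lemma G_det: "M \<in> G_q q \<Longrightarrow> M$1$1 * M$2$2 - M$1$2 * M$2$1 = 1"
proof (induction M rule: G_q.induct)
  case G_id then show ?case by (simp add: mat1_2)
next
  case (G_S M) then show ?case
    by (subst (1 2 3 4) mat2_eta[of M]) (simp add: S_mat_def mat2_mult algebra_simps)
next
  case (G_Sinv M) then show ?case
    by (subst (1 2 3 4) mat2_eta[of M]) (simp add: Sinv_eq Sinv_def mat2_mult algebra_simps)
next
  case (G_T M) then show ?case
    by (subst (1 2 3 4) mat2_eta[of M]) (simp add: T_mat_def mat2_mult algebra_simps)
next
  case (G_Tinv M) then show ?case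
    by (subst (1 2 3 4) mat2_eta[of M]) (simp add: Tinv_eq Tinv_def mat2_mult algebra_simps)
qed

lemma adj_mult: "adj (A ** B) = adj B ** adj A"
  by (subst (1 2) mat2_eta[of A], subst (1 2) mat2_eta[of B]) (simp add: adj_def mat2_mult algebra_simps)

lemma G_adj: "M \<in> G_q q \<Longrightarrow> adj M \<in> G_q q"
proof (induction M rule: G_q.induct)
  case G_id then show ?case by (simp add: mat1_2 adj_def G_q.G_id[of q, unfolded mat1_2])
next
  case (G_S M)
  have "adj S_mat = Sinv" by (simp add: adj_def S_mat_def Sinv_def)
  then show ?case using G_S by (simp add: adj_mult G_mult Sinv_in)
next
  case (G_Sinv M)
  have "adj Sinv = S_mat" by (simp add: adj_def S_mat_def Sinv_def)
  then show ?case using G_Sinv by (simp add: adj_mult G_mult S_in Sinv_eq)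
next
  case (G_T M)
  have "adj (T_mat q) = Tinv q" by (simp add: adj_def T_mat_def Tinv_def)
  then show ?case using G_T by (simp add: adj_mult G_mult Tinv_in)
next
  case (G_Tinv M)
  have "adj (Tinv q) = T_mat q" by (simp add: adj_def T_mat_def Tinv_def)
  then show ?case using G_Tinv by (simp add: adj_mult G_mult T_in Tinv_eq)
qed

lemma adj_left: "M \<in> G_q q \<Longrightarrow> adj M ** M = mat 1"
  using G_det[of M q] by (subst (2) mat2_eta[of M]) (simp add: adj_def mat2_mult mat1_2 algebra_simps)

lemma adj_right: "M \<in> G_q q \<Longrightarrow> M ** adj M = mat 1"
  using G_det[of M q] by (subst (1) mat2_eta[of M]) (simp add: adj_def mat2_mult mat1_2 algebra_simps)

lemma Dm_conj: "M \<in> G_q q \<Longrightarrow> Dm ** M ** Dm \<in> G_q q"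
proof (induction M rule: G_q.induct)
  case G_id then show ?case by (simp add: mat1_2 Dm_def mat2_mult G_q.G_id[of q, unfolded mat1_2])
next
  case (G_S M)
  have "Dm ** (S_mat ** M) ** Dm = Sinv ** (Dm ** M ** Dm)"
    by (subst (1 2) mat2_eta[of M]) (simp add: Dm_def S_mat_def Sinv_def mat2_mult)
  then show ?case using G_S by (simp add: G_mult Sinv_in)
next
  case (G_Sinv M)
  have "Dm ** (matrix_inv S_mat ** M) ** Dm = S_mat ** (Dm ** M ** Dm)"
    unfolding Sinv_eq by (subst (1 2) mat2_eta[of M]) (simp add: Sinv_eq Dm_def S_mat_def Sinv_def mat2_mult)
  then show ?case using G_Sinv by (simp add: G_mult S_in)
next
  case (G_T M)
  have "Dm ** (T_mat q ** M) ** Dm = Tinv q ** (Dm ** M ** Dm)"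
    by (subst (1 2) mat2_eta[of M]) (simp add: Dm_def T_mat_def Tinv_def mat2_mult algebra_simps)
  then show ?case using G_T by (simp add: G_mult Tinv_in)
next
  case (G_Tinv M)
  have "Dm ** (matrix_inv (T_mat q) ** M) ** Dm = T_mat q ** (Dm ** M ** Dm)"
    unfolding Tinv_eq by (subst (1 2) mat2_eta[of M]) (simp add: Tinv_eq Dm_def T_mat_def Tinv_def mat2_mult algebra_simps)
  then show ?case using G_Tinv by (simp add: G_mult T_in)
qed

abbreviation e1 :: "real^2" where "e1 \<equiv> vec2 1 0"

lemma Lambda_iff: "v \<in> Lambda_q q \<longleftrightarrow> (\<exists>M\<in>G_q q. v = M *v e1)"
  by (auto simp: Lambda_q_def)

lemma Lambda_closed: "M \<in> G_q q \<Longrightarrow> v \<in> Lambda_q q \<Longrightarrow> M *v v \<in> Lambda_q q"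
  by (auto simp: Lambda_iff matrix_vector_mul_assoc G_mult)

lemma mat_img_G: "M \<in> G_q q \<Longrightarrow> mat_img M (Lambda_q q) = Lambda_q q"
proof -
  assume M: "M \<in> G_q q"
  have "v \<in> mat_img M (Lambda_q q)" if "v \<in> Lambda_q q" for v
  proof -
    have "M *v (adj M *v v) = v" using adj_right[OF M]
      by (simp add: matrix_vector_mul_assoc matrix_vector_mul_lid)
    then show ?thesis unfolding mat_img_def using Lambda_closed[OF G_adj[OF M] that] by force
  qed
  then show ?thesis using Lambda_closed[OF M] unfolding mat_img_def by blast
qed

lemma e1_in: "e1 \<in> Lambda_q q"
  using G_q.G_id by (force simp: Lambda_iff matrix_vector_mul_lid)

lemma Lambda_neg: "vec2 x y \<in> Lambda_q q \<Longrightarrow> vec2 (-x) (-y) \<in> Lambda_q q"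
proof -
  assume "vec2 x y \<in> Lambda_q q"
  from Lambda_closed[OF G_mult[OF S_in S_in] this]
  show ?thesis by (simp add: S_mat_def mat2_mult mat2_vec)
qed

lemma Lambda_D: "vec2 x y \<in> Lambda_q q \<Longrightarrow> vec2 (-x) y \<in> Lambda_q q"
proof -
  assume "vec2 x y \<in> Lambda_q q"
  then obtain M where M: "M \<in> G_q q" "vec2 x y = M *v e1" by (auto simp: Lambda_iff)
  have "(Dm ** M ** Dm) *v e1 \<in> Lambda_q q"
    using Dm_conj[OF M(1)] by (auto simp: Lambda_iff)
  also have "(Dm ** M ** Dm) *v e1 = vec2 x (-y)"
    using M(2) by (subst (asm) mat2_eta[of M], subst mat2_eta[of M]) (simp add: Dm_def mat2_mult mat2_vec vec2_eq_iff)
  finally show ?thesis using Lambda_neg by fastforce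
qed

definition sq :: "nat \<Rightarrow> int \<Rightarrow> real" where
  "sq q k = sin (real_of_int k * (pi / real q)) / sin (pi / real q)"

definition Um :: "nat \<Rightarrow> real^2^2" where "Um q = mat2 (lambda_q q) (-1) 1 0"

definition Uit :: "nat \<Rightarrow> nat \<Rightarrow> real^2 \<Rightarrow> real^2" where
  "Uit q n = ((*v) (Um q)) ^^ n"

lemma Um_eq: "Um q = T_mat q ** S_mat"
  by (simp add: Um_def T_mat_def S_mat_def mat2_mult)

lemma Um_in: "Um q \<in> G_q q" by (simp add: Um_eq G_mult T_in S_in)

context
  fixes q :: nat
  assumes q3: "q \<ge> 3"
begin

lemma theta_pos: "0 < pi / real q" using q3 by simp
lemma theta_le: "pi / real q \<le> pi / 3"
  using q3 by (intro divide_left_mono) auto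
lemma theta_lt_pi: "pi / real q < pi" using theta_le pi_gt_zero by linarith
lemma sin_theta_pos: "0 < sin (pi / real q)"
  using theta_pos theta_lt_pi by (intro sin_gt_zero) auto

lemma lambda_lt2: "lambda_q q < 2"
proof -
  have "cos (pi / real q) < cos 0"
    using theta_pos theta_lt_pi by (intro cos_monotone_0_pi) auto
  then show ?thesis by (simp add: lambda_q_def)
qed

lemma lambda_ge1: "1 \<le> lambda_q q"
proof -
  have "cos (pi/3) \<le> cos (pi / real q)"
    using theta_pos theta_le theta_lt_pi by (intro cos_monotone_0_pi_le) auto
  then show ?thesis by (simp add: lambda_q_def cos_60)
qed

lemma sq_rec: "sq q (k+2) = lambda_q q * sq q (k+1) - sq q k"
proof -
  let ?t = "pi / real q"
  have "\<forall>t::real. real_of_int (k+2) * t = real_of_int (k+1) * t + t \<and> real_of_int k * t = real_of_int (k+1) * t - t"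
    by (simp add: algebra_simps)
  then have a: "real_of_int (k+2) * ?t = real_of_int (k+1) * ?t + ?t"
    and b: "real_of_int k * ?t = real_of_int (k+1) * ?t - ?t" by blast+
  have "sin (real_of_int (k+2) * ?t) + sin (real_of_int k * ?t) = 2 * cos ?t * sin (real_of_int (k+1) * ?t)"
    unfolding a b sin_add sin_diff by simp
  then show ?thesis using sin_theta_pos
    by (simp add: sq_def lambda_q_def field_simps)
qed

lemma sq_rec_gen: "a = k + 2 \<Longrightarrow> b = k + 1 \<Longrightarrow> sq q a = lambda_q q * sq q b - sq q k"
  using sq_rec by simp

lemma sq_0[simp]: "sq q 0 = 0" by (simp add: sq_def)
lemma sq_1[simp]: "sq q 1 = 1" using sin_theta_pos by (simp add: sq_def)
lemma sq_m1[simp]: "sq q (-1) = -1" using sin_theta_pos by (simp add: sq_def)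
lemma sq_q: "sq q (int q) = 0" using q3 by (simp add: sq_def)
lemma sq_q1: "sq q (int q + 1) = -1"
proof -
  have "real_of_int (int q + 1) * (pi / real q) = pi / real q + pi" using q3 by (simp add: field_simps)
  then show ?thesis using sin_theta_pos by (simp add: sq_def)
qed
lemma sq_qm1: "sq q (int q - 1) = 1"
proof -
  have "real_of_int (int q - 1) * (pi / real q) = pi - pi / real q" using q3 by (simp add: field_simps)
  then show ?thesis using sin_theta_pos by (simp add: sq_def)
qed
lemma sq_qm2: "sq q (int q - 2) = lambda_q q"
proof -
  have "real_of_int (int q - 2) * (pi / real q) = pi - 2 * (pi / real q)" using q3 by (simp add: field_simps)
  moreover have "sin (2 * (pi / real q)) = 2 * sin (pi / real q) * cos (pi / real q)" by (rule sin_double)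
  ultimately show ?thesis using sin_theta_pos by (simp add: sq_def lambda_q_def)
qed

lemma sq_ge1: "1 \<le> k \<Longrightarrow> k \<le> int q - 1 \<Longrightarrow> 1 \<le> sq q k"
proof -
  assume k: "1 \<le> k" "k \<le> int q - 1"
  let ?t = "pi / real q"
  have t1: "?t \<le> real_of_int k * ?t" using k theta_pos mult_right_mono[of 1 "real_of_int k" ?t] by simp
  have t2: "real_of_int k * ?t \<le> pi - ?t"
  proof -
    have "real_of_int k * ?t \<le> (real q - 1) * ?t"
      using k theta_pos by (intro mult_right_mono) (auto simp: of_int_le_iff[symmetric])
    also have "\<dots> = pi - ?t" using q3 by (simp add: field_simps)
    finally show ?thesis .
  qed
  have "sin ?t \<le> sin (real_of_int k * ?t)"
  proof (cases "real_of_int k * ?t \<le> pi/2")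
    case True show ?thesis by (rule sin_monotone_2pi_le) (use t1 True theta_pos pi_gt_zero in linarith)+
  next
    case False
    have "sin ?t \<le> sin (pi - real_of_int k * ?t)"
      by (rule sin_monotone_2pi_le) (use t2 False theta_pos pi_gt_zero in linarith)+
    then show ?thesis by simp
  qed
  then show ?thesis using sin_theta_pos by (simp add: sq_def)
qed

lemma sq_nonneg: "0 \<le> k \<Longrightarrow> k \<le> int q \<Longrightarrow> 0 \<le> sq q k"
proof -
  assume k: "0 \<le> k" "k \<le> int q"
  have "real_of_int k * (pi / real q) \<le> real q * (pi / real q)"
    using k theta_pos by (intro mult_right_mono) (auto simp: of_int_le_iff[symmetric])
  then have "real_of_int k * (pi / real q) \<le> pi" using q3 by simp
  then show ?thesis using k sin_theta_pos theta_pos q3 by (auto simp: sq_def intro!: divide_nonneg_pos sin_ge_zero)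
qed

lemma sq_det: "sq q (int k + 1)^2 - sq q (int k) * sq q (int k + 2) = 1"
proof (induction k)
  case 0 then show ?case using sq_rec[of 0] by simp
next
  case (Suc k)
  have r: "sq q (int k + 3) = lambda_q q * sq q (int k + 2) - sq q (int k + 1)"
    by (rule sq_rec_gen) simp_all
  have r2: "sq q (int k + 2) = lambda_q q * sq q (int k + 1) - sq q (int k)"
    by (rule sq_rec_gen) simp_all
  have eqs: "int (Suc k) + 1 = int k + 2" "int (Suc k) = int k + 1" "int (Suc k) + 2 = int k + 3" by simp_all
  have "sq q (int (Suc k) + 1)^2 - sq q (int (Suc k)) * sq q (int (Suc k) + 2)
      = sq q (int k + 2)^2 - sq q (int k + 1) * sq q (int k + 3)"
    unfolding eqs(1) unfolding eqs(3) unfolding eqs(2) ..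
  also have "\<dots> = sq q (int k + 1)^2 - sq q (int k) * sq q (int k + 2)"
    unfolding r power2_eq_square using r2 by algebra
  finally show ?case using Suc by simp
qed

lemma Uit_formula:
  "Uit q n (vec2 x y) = vec2 (sq q (int n + 1) * x - sq q (int n) * y) (sq q (int n) * x - sq q (int n - 1) * y)"
proof (induction n)
  case 0 then show ?case by (simp add: Uit_def)
next
  case (Suc n)
  have r: "sq q (int n + 2) = lambda_q q * sq q (int n + 1) - sq q (int n)"
    by (rule sq_rec_gen) simp_all
  have r1: "sq q (int n + 1) = lambda_q q * sq q (int n) - sq q (int n - 1)"
    by (rule sq_rec_gen) simp_all
  have eqs: "int (Suc n) + 1 = int n + 2" "int (Suc n) = int n + 1" "int (Suc n) - 1 = int n" by simp_all
  have "Uit q (Suc n) (vec2 x y) = Um q *v Uit q n (vec2 x y)" by (simp add: Uit_def)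
  also have "\<dots> = vec2 (sq q (int (Suc n) + 1) * x - sq q (int (Suc n)) * y) (sq q (int (Suc n)) * x - sq q (int (Suc n) - 1) * y)"
    unfolding Suc eqs(1) unfolding eqs(3) unfolding eqs(2) unfolding Um_def mat2_vec vec2_eq_iff r
    using r1 by (simp add: algebra_simps) (metis distrib_left)
  finally show ?case .
qed

end

lemma vec2_cases: "(\<And>a b. P (vec2 a b)) \<Longrightarrow> P v" by (metis vec2_eta)

lemma neg_vec2: "- vec2 x y = vec2 (-x) (-y)" by (simp add: vec_eq_iff forall_2)
lemma mv_neg: "(M::real^2^2) *v (- v) = - (M *v v)"
  by (subst (1 2) vec2_eta[of v], subst (1 2) mat2_eta[of M]) (simp add: mat2_vec neg_vec2)
lemma S_vec: "S_mat *v vec2 x y = vec2 (-y) x" by (simp add: S_mat_def mat2_vec)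

inductive_set Om :: "nat \<Rightarrow> (real^2) set" for q :: nat where
  om0: "vec2 0 1 \<in> Om q"
| omS: "w \<in> Om q \<Longrightarrow> 1 \<le> j \<Longrightarrow> j < q \<Longrightarrow> - (S_mat *v Uit q j w) \<in> Om q"

definition Inv :: "nat \<Rightarrow> (real^2) set" where
  "Inv q = {v. \<exists>w\<in>Om q. \<exists>j<q. v = Uit q j w \<or> v = - Uit q j w}"

lemma Uit_0[simp]: "Uit q 0 w = w" by (simp add: Uit_def)
lemma Uit_Suc: "Uit q (Suc j) w = Um q *v Uit q j w" by (simp add: Uit_def)

context
  fixes q :: nat
  assumes q3: "q \<ge> 3"
begin

lemmas sq_simps[simp] = sq_1[OF q3] sq_m1[OF q3] sq_0[OF q3]

lemma Om_prop: "w \<in> Om q \<Longrightarrow> w$1 \<le> 0 \<and> 1 \<le> w$2 \<and> (w$1 = 0 \<or> w$1 \<le> -1)"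
proof (induction w rule: Om.induct)
  case om0 then show ?case by simp
next
  case (omS w j)
  obtain x y where w: "w = vec2 x y" using vec2_eta by blast
  have x: "x \<le> 0" "x = 0 \<or> x \<le> -1" and y: "1 \<le> y" using omS.IH w by auto
  have sj: "1 \<le> sq q (int j)" using omS.hyps q3 by (intro sq_ge1) auto
  have sj1: "0 \<le> sq q (int j - 1)" using omS.hyps q3 by (intro sq_nonneg) auto
  have sj2: "0 \<le> sq q (int j + 1)" using omS.hyps q3 by (intro sq_nonneg) auto
  have e: "- (S_mat *v Uit q j w) = vec2 (sq q (int j) * x - sq q (int j - 1) * y) (sq q (int j) * y - sq q (int j + 1) * x)"
    unfolding w Uit_formula[OF q3] S_vec neg_vec2 by (simp add: algebra_simps)
  have A1: "sq q (int j) * x \<le> 0" using sj x by (simp add: mult_nonneg_nonpos)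
  have A2: "0 \<le> sq q (int j - 1) * y" using sj1 y by simp
  have B1: "0 \<le> - (sq q (int j + 1) * x)" using sj2 x by (simp add: mult_nonneg_nonpos)
  have B2: "1 \<le> sq q (int j) * y" using sj y by (metis mult_mono' mult_1 zero_le_one)
  have C: "sq q (int j) * x - sq q (int j - 1) * y = 0 \<or> sq q (int j) * x - sq q (int j - 1) * y \<le> -1"
  proof (cases "j = 1")
    case True then show ?thesis using x by simp
  next
    case False
    then have "1 \<le> sq q (int j - 1)" using omS.hyps q3 by (intro sq_ge1) auto
    then have "1 \<le> sq q (int j - 1) * y" using y by (metis mult_mono' mult_1 zero_le_one)
    then show ?thesis using A1 by simp
  qed
  show ?case unfolding e using A1 A2 B1 B2 C by simp
qed

lemma Uit_q: "Uit q q w = - w"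
proof -
  obtain x y where w: "w = vec2 x y" using vec2_eta by blast
  show ?thesis unfolding w Uit_formula[OF q3] using sq_q[OF q3] sq_q1[OF q3] sq_qm1[OF q3]
    by (simp add: neg_vec2)
qed

lemma Uit_qm1: "Uit q (q - 1) (vec2 x y) = vec2 (-y) (x - lambda_q q * y)"
proof -
  have e: "int (q - 1) + 1 = int q" "int (q - 1) = int q - 1" "int (q - 1) - 1 = int q - 2" using q3 by auto
  show ?thesis unfolding Uit_formula[OF q3] e using sq_q[OF q3] sq_qm2[OF q3] sq_qm1[OF q3]
    by simp
qed

lemma Inv_neg: "v \<in> Inv q \<Longrightarrow> - v \<in> Inv q"
  unfolding Inv_def by force

lemma Inv_U: "v \<in> Inv q \<Longrightarrow> Um q *v v \<in> Inv q"
proof -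
  assume "v \<in> Inv q"
  then obtain w j where wj: "w \<in> Om q" "j < q" "v = Uit q j w \<or> v = - Uit q j w" unfolding Inv_def by blast
  have U: "Um q *v Uit q j w \<in> Inv q \<and> - (Um q *v Uit q j w) \<in> Inv q"
  proof (cases "Suc j < q")
    case True then show ?thesis using wj unfolding Inv_def Uit_Suc[symmetric] by blast
  next
    case False
    then have "Suc j = q" using wj by simp
    then have e: "Um q *v Uit q j w = - Uit q 0 w" using Uit_q by (metis Uit_Suc Uit_0)
    have "0 < q" using q3 by simp
    then have "- Uit q 0 w \<in> Inv q" "Uit q 0 w \<in> Inv q" using wj unfolding Inv_def by blast+
    then show ?thesis unfolding e by simp
  qed
  then show ?thesis using wj by (auto simp: mv_neg)
qed

lemma Inv_Uit: "v \<in> Inv q \<Longrightarrow> Uit q n v \<in> Inv q"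
  by (induction n) (auto simp: Uit_Suc Inv_U)

lemma SS: "S_mat *v (S_mat *v v) = - v"
  by (subst (1 2) vec2_eta[of v]) (simp add: S_vec neg_vec2)

lemma Inv_S: "v \<in> Inv q \<Longrightarrow> S_mat *v v \<in> Inv q"
proof -
  assume "v \<in> Inv q"
  then obtain w j where wj: "w \<in> Om q" "j < q" "v = Uit q j w \<or> v = - Uit q j w" unfolding Inv_def by blast
  have "S_mat *v Uit q j w \<in> Inv q \<and> - (S_mat *v Uit q j w) \<in> Inv q"
  proof (cases "j = 0")
    case False
    then have w': "- (S_mat *v Uit q j w) \<in> Om q" using wj by (intro omS) auto
    have "- (S_mat *v Uit q j w) = Uit q 0 (- (S_mat *v Uit q j w))" by simp
    then show ?thesis using w' q3 unfolding Inv_def by (metis (mono_tags, lifting) mem_Collect_eq minus_minus gr_zeroI not_numeral_le_zero zero_less_iff_neq_zero)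
  next
    case True
    show ?thesis using wj(1)
    proof (cases rule: Om.cases)
      case om0
      have "S_mat *v Uit q j w = Uit q 1 (vec2 0 1)" using True om0 by (simp add: S_vec Um_def mat2_vec Uit_Suc)
      then show ?thesis using q3 Om.om0[of q] unfolding Inv_def by force
    next
      case (omS w'' j')
      have "S_mat *v Uit q j w = Uit q j' w''" using True omS by (simp add: mv_neg SS)
      then show ?thesis using omS unfolding Inv_def by force
    qed
  qed
  then show ?thesis using wj by (auto simp: mv_neg)
qed

lemma e1_Inv: "e1 \<in> Inv q"
proof -
  have "e1 = - Uit q 1 (vec2 0 1)" by (simp add: Um_def mat2_vec neg_vec2 Uit_Suc)
  then show ?thesis using q3 Om.om0[of q] unfolding Inv_def by force
qed

lemma G_Inv: "M \<in> G_q q \<Longrightarrow> v \<in> Inv q \<Longrightarrow> M *v v \<in> Inv q"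
proof (induction M arbitrary: v rule: G_q.induct)
  case G_id then show ?case by (simp add: matrix_vector_mul_lid)
next
  case (G_S M) then show ?case by (simp add: matrix_vector_mul_assoc[symmetric] Inv_S)
next
  case (G_Sinv M)
  have "\<And>x. Sinv *v x = - (S_mat *v x)"
    subgoal for x by (rule vec2_cases[of _ x]) (simp add: S_vec Sinv_def mat2_vec neg_vec2)
    done
  then show ?case using G_Sinv by (simp add: matrix_vector_mul_assoc[symmetric] Sinv_eq Inv_S Inv_neg)
next
  case (G_T M)
  have "\<And>x. T_mat q *v x = Um q *v (- (S_mat *v x))"
    subgoal for x by (rule vec2_cases[of _ x]) (simp add: S_vec T_mat_def Um_def mat2_vec neg_vec2 add.commute)
    done
  then show ?case using G_T by (simp add: matrix_vector_mul_assoc[symmetric] Inv_S Inv_neg Inv_U)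
next
  case (G_Tinv M)
  have "\<And>x. Tinv q *v x = - (S_mat *v Uit q (q - 1) x)"
    subgoal for x by (rule vec2_cases[of _ x]) (simp only: Uit_qm1, simp add: S_vec Tinv_def mat2_vec neg_vec2)
    done
  then show ?case using G_Tinv by (simp add: matrix_vector_mul_assoc[symmetric] Tinv_eq Inv_S Inv_neg Inv_Uit)
qed

lemma Lambda_Inv: "v \<in> Lambda_q q \<Longrightarrow> v \<in> Inv q"
  using G_Inv e1_Inv by (auto simp: Lambda_iff)

lemma Inv_K: "v \<in> Inv q \<Longrightarrow> v$2 = 0 \<or> 1 \<le> \<bar>v$2\<bar>"
proof -
  assume "v \<in> Inv q"
  then obtain w j where wj: "w \<in> Om q" "j < q" "v = Uit q j w \<or> v = - Uit q j w" unfolding Inv_def by blast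
  obtain x y where w: "w = vec2 x y" using vec2_eta by blast
  have x: "x \<le> 0" "x = 0 \<or> x \<le> -1" and y: "1 \<le> y" using Om_prop[OF wj(1)] w by auto
  have "sq q (int j) * x - sq q (int j - 1) * y = 0 \<or> 1 \<le> \<bar>sq q (int j) * x - sq q (int j - 1) * y\<bar>"
  proof -
    consider "j = 0" | "j = 1" | "2 \<le> j" by linarith
    then show ?thesis
    proof cases
      case 1 then show ?thesis using y by simp
    next
      case 2 then show ?thesis using x by auto
    next
      case 3
      have sj: "1 \<le> sq q (int j)" using 3 wj q3 by (intro sq_ge1) auto
      have "1 \<le> sq q (int j - 1)" using 3 wj q3 by (intro sq_ge1) auto
      then have "1 \<le> sq q (int j - 1) * y" using y by (metis mult_mono' mult_1 zero_le_one)
      moreover have "sq q (int j) * x \<le> 0" using sj x by (simp add: mult_nonneg_nonpos)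
      ultimately show ?thesis by simp
    qed
  qed
  then show ?thesis using wj(3) unfolding w Uit_formula[OF q3] by (auto simp: neg_vec2)
qed

lemma Lambda_K: "v \<in> Lambda_q q \<Longrightarrow> v$2 = 0 \<or> 1 \<le> \<bar>v$2\<bar>"
  using Lambda_Inv Inv_K by blast

end

definition det2 :: "real^2 \<Rightarrow> real^2 \<Rightarrow> real" where
  "det2 v w = v$1 * w$2 - v$2 * w$1"

lemma T_vec: "T_mat q *v vec2 x y = vec2 (x + lambda_q q * y) y" by (simp add: T_mat_def mat2_vec)
lemma Tinv_vec: "Tinv q *v vec2 x y = vec2 (x - lambda_q q * y) y" by (simp add: Tinv_def mat2_vec)

lemma Lambda_Tpow_nat: "vec2 x y \<in> Lambda_q q \<Longrightarrow> vec2 (x + real n * lambda_q q * y) y \<in> Lambda_q q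
   \<and> vec2 (x - real n * lambda_q q * y) y \<in> Lambda_q q"
proof (induction n)
  case 0 then show ?case by simp
next
  case (Suc n)
  then have a: "vec2 (x + real n * lambda_q q * y) y \<in> Lambda_q q" and b: "vec2 (x - real n * lambda_q q * y) y \<in> Lambda_q q" by auto
  from Lambda_closed[OF T_in a] Lambda_closed[OF Tinv_in b]
  show ?case by (simp add: T_vec Tinv_vec algebra_simps)
qed

lemma Lambda_Tpow: "vec2 x y \<in> Lambda_q q \<Longrightarrow> vec2 (x + real_of_int m * lambda_q q * y) y \<in> Lambda_q q"
proof -
  assume a: "vec2 x y \<in> Lambda_q q"
  define n where "n = nat \<bar>m\<bar>"
  have "m = int n \<or> m = - int n" unfolding n_def by arith
  then show ?thesis using Lambda_Tpow_nat[OF a, of n] by auto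
qed

lemma Me1: "M *v e1 = vec2 (M$1$1) (M$2$1)"
  by (subst mat2_eta[of M]) (simp add: mat2_vec)

context
  fixes q :: nat
  assumes q3: "q \<ge> 3"
begin

lemma Lambda_det: "v \<in> Lambda_q q \<Longrightarrow> w \<in> Lambda_q q \<Longrightarrow> det2 v w = 0 \<or> 1 \<le> \<bar>det2 v w\<bar>"
proof -
  assume v: "v \<in> Lambda_q q" and w: "w \<in> Lambda_q q"
  then obtain M where M: "M \<in> G_q q" "v = M *v e1" by (auto simp: Lambda_iff)
  have "adj M *v w \<in> Lambda_q q" using Lambda_closed[OF G_adj[OF M(1)] w] .
  moreover have "(adj M *v w)$2 = det2 v w"
    using M(2) by (subst vec2_eta[of w], subst mat2_eta[of M], simp add: adj_def mat2_vec det2_def Me1 algebra_simps)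
  ultimately show ?thesis using Lambda_K[OF q3] by metis
qed

lemma Lambda_horiz: "vec2 k 0 \<in> Lambda_q q \<Longrightarrow> k = 1 \<or> k = -1"
proof -
  assume "vec2 k 0 \<in> Lambda_q q"
  then obtain M where M: "M \<in> G_q q" "vec2 k 0 = M *v e1" by (auto simp: Lambda_iff)
  have "vec2 k 0 = vec2 (M$1$1) (M$2$1)" using M(2) by (subst (asm) mat2_eta[of M]) (simp add: mat2_vec)
  then have m: "M$1$1 = k" "M$2$1 = 0" by (simp_all add: vec2_eq_iff)
  have d: "k * M$2$2 = 1" using G_det[OF M(1)] m by simp
  have "S_mat *v vec2 k 0 \<in> Lambda_q q" using Lambda_closed[OF S_in] \<open>vec2 k 0 \<in> Lambda_q q\<close> by blast
  then have "vec2 0 k \<in> Lambda_q q" by (simp add: S_vec)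
  then have k1: "1 \<le> \<bar>k\<bar>" using Lambda_K[OF q3, of "vec2 0 k"] d by auto
  have "adj M *v e1 \<in> Lambda_q q" using Lambda_closed[OF G_adj[OF M(1)] e1_in] .
  then have "vec2 (M$2$2) 0 \<in> Lambda_q q" using m by (simp add: adj_def mat2_vec)
  then have "S_mat *v vec2 (M$2$2) 0 \<in> Lambda_q q" using Lambda_closed[OF S_in] by blast
  then have "vec2 0 (M$2$2) \<in> Lambda_q q" by (simp add: S_vec)
  then have k2: "1 \<le> \<bar>M$2$2\<bar>" using Lambda_K[OF q3, of "vec2 0 (M$2$2)"] d by auto
  have "\<bar>k\<bar> * \<bar>M$2$2\<bar> = 1" using d by (metis abs_mult abs_one)
  moreover have "\<bar>k\<bar> * 1 \<le> \<bar>k\<bar> * \<bar>M$2$2\<bar>" using k2 by (intro mult_left_mono) auto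
  ultimately have "\<bar>k\<bar> = 1" using k1 by linarith
  then show ?thesis by auto
qed

lemma Lambda_y1: "vec2 x 1 \<in> Lambda_q q \<Longrightarrow> \<exists>n::int. x = real_of_int n * lambda_q q"
proof -
  assume x: "vec2 x 1 \<in> Lambda_q q"
  define n where "n = round (x / lambda_q q)"
  have lpos: "0 < lambda_q q" using lambda_ge1[OF q3] by simp
  have "\<bar>x / lambda_q q - real_of_int n\<bar> \<le> 1/2" unfolding n_def using of_int_round_abs_le[of "x / lambda_q q"] by (simp add: abs_minus_commute)
  then have "\<bar>x - real_of_int n * lambda_q q\<bar> \<le> lambda_q q / 2"
  proof -
    have "x - real_of_int n * lambda_q q = lambda_q q * (x / lambda_q q - real_of_int n)" using lpos by (simp add: field_simps)
    then have "\<bar>x - real_of_int n * lambda_q q\<bar> = lambda_q q * \<bar>x / lambda_q q - real_of_int n\<bar>" using lpos by (simp add: abs_mult)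
    also have "\<dots> \<le> lambda_q q * (1/2)" using \<open>\<bar>x / lambda_q q - real_of_int n\<bar> \<le> 1/2\<close> lpos by (intro mult_left_mono) auto
    finally show ?thesis by simp
  qed
  then have small: "\<bar>x - real_of_int n * lambda_q q\<bar> < 1" using lambda_lt2[OF q3] by linarith
  have "vec2 (x + real_of_int (-n) * lambda_q q * 1) 1 \<in> Lambda_q q" by (rule Lambda_Tpow[OF x])
  then have "S_mat *v vec2 (x - real_of_int n * lambda_q q) 1 \<in> Lambda_q q" using Lambda_closed[OF S_in] by simp
  then have "vec2 (-1) (x - real_of_int n * lambda_q q) \<in> Lambda_q q" by (simp add: S_vec)
  then have "x - real_of_int n * lambda_q q = 0" using Lambda_K[OF q3, of "vec2 (-1) (x - real_of_int n * lambda_q q)"] small by auto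
  then show ?thesis by auto
qed

lemma Lambda_norm: "v \<in> Lambda_q q \<Longrightarrow> 1 \<le> norm v"
proof -
  assume v: "v \<in> Lambda_q q"
  show ?thesis
  proof (cases "v$2 = 0")
    case True
    then have "v = vec2 (v$1) 0" by (metis vec2_eta)
    then have "vec2 (v$1) 0 \<in> Lambda_q q" using v by simp
    then have "\<bar>v$1\<bar> = 1" using Lambda_horiz by fastforce
    then show ?thesis using component_le_norm_cart[of v 1] by simp
  next
    case False
    then have "1 \<le> \<bar>v$2\<bar>" using Lambda_K[OF q3 v] by simp
    then show ?thesis using component_le_norm_cart[of v 2] by simp
  qed
qed

lemma Lambda_parallel: "v \<in> Lambda_q q \<Longrightarrow> w \<in> Lambda_q q \<Longrightarrow> det2 v w = 0 \<Longrightarrow> w = v \<or> w = - v"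
proof -
  assume v: "v \<in> Lambda_q q" and w: "w \<in> Lambda_q q" and d: "det2 v w = 0"
  then obtain M where M: "M \<in> G_q q" "v = M *v e1" by (auto simp: Lambda_iff)
  have u: "adj M *v w \<in> Lambda_q q" using Lambda_closed[OF G_adj[OF M(1)] w] .
  have "(adj M *v w)$2 = det2 v w"
    using M(2) by (subst vec2_eta[of w], subst mat2_eta[of M], simp add: adj_def mat2_vec det2_def Me1 algebra_simps)
  then have "adj M *v w = vec2 ((adj M *v w)$1) 0" using d vec2_eta by metis
  then obtain k where k: "adj M *v w = vec2 k 0" by blast
  then have "k = 1 \<or> k = -1" using u Lambda_horiz by simp
  have "w = M *v (adj M *v w)" using adj_right[OF M(1)] by (simp add: matrix_vector_mul_assoc matrix_vector_mul_lid)
  also have "\<dots> = M *v vec2 k 0" using k by simp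
  finally have "w = M *v vec2 k 0" .
  moreover have "vec2 (-1) 0 = - e1" by (simp add: neg_vec2)
  ultimately show ?thesis using \<open>k = 1 \<or> k = -1\<close> M(2)
    by (auto simp: mv_neg)
qed

lemma Lambda_finite: "finite (Lambda_q q \<inter> cball 0 R)"
proof (rule ccontr)
  assume inf: "infinite (Lambda_q q \<inter> cball 0 R)"
  let ?X = "Lambda_q q \<inter> cball 0 R"
  have bX: "bounded ?X" by (meson bounded_Int bounded_cball)
  obtain z where z: "z islimpt ?X" by (rule bounded_infinite_imp_islimpt[OF subset_refl bX inf])
  define \<delta> where "\<delta> = min 1 (1 / (2 * \<bar>R\<bar> + 2))"
  have dpos: "0 < \<delta>" unfolding \<delta>_def by (simp add: add_nonneg_pos)
  have i1: "infinite (?X \<inter> ball z (\<delta>/2))" using z dpos by (simp add: islimpt_eq_infinite_ball)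
  then obtain u where u: "u \<in> ?X \<inter> ball z (\<delta>/2)" using infinite_imp_nonempty by blast
  have "infinite (?X \<inter> ball z (\<delta>/2) - {u})" using i1 by simp
  then obtain w where w0: "w \<in> ?X \<inter> ball z (\<delta>/2) - {u}" using infinite_imp_nonempty by blast
  then have w: "w \<in> ?X \<inter> ball z (\<delta>/2)" "w \<noteq> u" by auto
  have "dist z u < \<delta>/2" "dist z w < \<delta>/2" using u w by auto
  then have duw: "dist u w < \<delta>" using dist_triangle[of u w z] by (simp add: dist_commute)
  have nu: "norm u \<le> \<bar>R\<bar>" using u by auto
  have b1: "\<bar>u$1\<bar> \<le> \<bar>R\<bar>" "\<bar>u$2\<bar> \<le> \<bar>R\<bar>" using component_le_norm_cart[of u] nu by (meson order_trans)+
  have nwu: "norm (w - u) < \<delta>" using duw by (simp add: dist_norm norm_minus_commute)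
  have b2: "\<bar>w$1 - u$1\<bar> < \<delta>" "\<bar>w$2 - u$2\<bar> < \<delta>"
    using component_le_norm_cart[of "w - u" 1] component_le_norm_cart[of "w - u" 2] nwu by auto
  have e: "det2 u w = u$1 * (w$2 - u$2) - u$2 * (w$1 - u$1)" by (simp add: det2_def algebra_simps)
  have "\<bar>det2 u w\<bar> \<le> \<bar>u$1 * (w$2 - u$2)\<bar> + \<bar>u$2 * (w$1 - u$1)\<bar>"
    unfolding e by (rule abs_triangle_ineq4)
  also have "\<dots> = \<bar>u$1\<bar> * \<bar>w$2 - u$2\<bar> + \<bar>u$2\<bar> * \<bar>w$1 - u$1\<bar>" by (simp add: abs_mult)
  also have "\<dots> \<le> \<bar>R\<bar> * \<delta> + \<bar>R\<bar> * \<delta>"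
    using b1 b2 by (intro add_mono mult_mono) auto
  also have "\<dots> < 1"
  proof -
    have p: "0 < 2 * \<bar>R\<bar> + 2" by simp
    have "\<delta> \<le> 1 / (2 * \<bar>R\<bar> + 2)" unfolding \<delta>_def by simp
    then have "\<delta> * (2 * \<bar>R\<bar> + 2) \<le> 1" using p by (simp add: le_divide_eq)
    then show ?thesis using dpos by (simp add: algebra_simps)
  qed
  finally have "\<bar>det2 u w\<bar> < 1" .
  then have "det2 u w = 0" using Lambda_det u w by force
  then have "w = u \<or> w = - u" using Lambda_parallel u w by blast
  then have "w = - u" using w by simp
  then have "u - w = 2 *\<^sub>R u" by (simp add: scaleR_2)
  then have "dist u w = 2 * norm u" by (simp add: dist_norm)
  moreover have "1 \<le> norm u" using Lambda_norm u by blast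
  moreover have "\<delta> \<le> 1" unfolding \<delta>_def by simp
  ultimately show False using duw by simp
qed

end

lemma g_vec: "g_mat a b *v vec2 x y = vec2 (a * x + b * y) (inverse a * y)"
  by (simp add: g_mat_def mat2_vec)
lemma h_vec: "h_mat s *v vec2 x y = vec2 x (y - s * x)"
  by (simp add: h_mat_def mat2_vec)
lemma h_add: "h_mat s ** h_mat t = h_mat (s + t)"
  by (simp add: h_mat_def mat2_mult algebra_simps)
lemma h_0: "h_mat 0 = mat 1" by (simp add: h_mat_def mat1_2)

lemma mat_img_mult: "mat_img (A ** B) X = mat_img A (mat_img B X)"
  unfolding mat_img_def by (auto simp: matrix_vector_mul_assoc[symmetric] image_image)

lemma mat_img_lid: "mat_img (mat 1) X = X"
  unfolding mat_img_def by (simp add: matrix_vector_mul_lid)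

lemma mat_img_mem: "w \<in> mat_img A X \<longleftrightarrow> (\<exists>v\<in>X. w = A *v v)"
  unfolding mat_img_def by auto

lemma g_e1: "g_mat a b *v e1 = vec2 a 0" by (simp add: g_vec)

lemma S1_mem: "w \<in> S1 \<longleftrightarrow> 0 < w$1 \<and> w$1 \<le> 1" by (simp add: S1_def)

lemma e2_in: "vec2 0 1 \<in> Lambda_q q"
  using Lambda_closed[OF S_in e1_in] by (simp add: S_vec)

context
  fixes q :: nat
  assumes q3: "q \<ge> 3"
begin

lemma g_shift: "mat_img (g_mat c d0) (Lambda_q q) = mat_img (g_mat c (d0 + real_of_int n * c * lambda_q q)) (Lambda_q q)"
proof -
  have "g_mat c (d0 + real_of_int n * c * lambda_q q) *v vec2 x y = g_mat c d0 *v vec2 (x + real_of_int n * lambda_q q * y) y" for x y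
    by (simp add: g_vec algebra_simps)
  have 1: "vec2 x y \<in> Lambda_q q \<Longrightarrow> g_mat c (d0 + real_of_int n * c * lambda_q q) *v vec2 x y \<in> mat_img (g_mat c d0) (Lambda_q q)" for x y
    unfolding mat_img_mem
    by (rule bexI[of _ "vec2 (x + real_of_int n * lambda_q q * y) y"]) (simp add: g_vec algebra_simps, erule Lambda_Tpow)
  have 2: "vec2 x y \<in> Lambda_q q \<Longrightarrow> g_mat c d0 *v vec2 x y \<in> mat_img (g_mat c (d0 + real_of_int n * c * lambda_q q)) (Lambda_q q)" for x y
    unfolding mat_img_mem
    by (rule bexI[of _ "vec2 (x + real_of_int (-n) * lambda_q q * y) y"]) (simp add: g_vec algebra_simps, erule Lambda_Tpow)
  show ?thesis
  proof
    show "mat_img (g_mat c d0) (Lambda_q q) \<subseteq> mat_img (g_mat c (d0 + real_of_int n * c * lambda_q q)) (Lambda_q q)"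
      using 2 unfolding mat_img_def by (auto, metis vec2_eta)
    show "mat_img (g_mat c (d0 + real_of_int n * c * lambda_q q)) (Lambda_q q) \<subseteq> mat_img (g_mat c d0) (Lambda_q q)"
      using 1 unfolding mat_img_def by (auto, metis vec2_eta)
  qed
qed

lemma tri_exists:
  assumes det: "A$1$1 * A$2$2 - A$1$2 * A$2$1 = 1"
    and c: "vec2 c 0 \<in> mat_img A (Lambda_q q)" "0 < c" "c \<le> 1"
  shows "\<exists>d. (c, d) \<in> farey_tri q \<and> mat_img A (Lambda_q q) = mat_img (g_mat c d) (Lambda_q q)"
proof -
  obtain v where v: "v \<in> Lambda_q q" "vec2 c 0 = A *v v" using c(1) by (auto simp: mat_img_mem)
  obtain M where M: "M \<in> G_q q" "v = M *v e1" using v(1) by (auto simp: Lambda_iff)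
  let ?N = "A ** M"
  have N1: "?N *v e1 = vec2 c 0" using v M by (simp add: matrix_vector_mul_assoc)
  have n: "?N$1$1 = c" "?N$2$1 = 0" using N1 unfolding Me1 by (simp_all add: vec2_eq_iff)
  have dN: "?N$1$1 * ?N$2$2 - ?N$1$2 * ?N$2$1 = 1"
  proof -
    have "?N$1$1 * ?N$2$2 - ?N$1$2 * ?N$2$1 = (A$1$1 * A$2$2 - A$1$2 * A$2$1) * (M$1$1 * M$2$2 - M$1$2 * M$2$1)"
      by (subst (1 2 3 4) mat2_eta[of A], subst (1 2 3 4) mat2_eta[of M]) (simp add: mat2_mult algebra_simps)
    then show ?thesis using det G_det[OF M(1)] by simp
  qed
  have "?N$2$2 = inverse c" using dN n c(2) by (simp add: field_simps)
  then have Ng: "?N = g_mat c (?N$1$2)" using n by (subst mat2_eta[of ?N]) (simp add: g_mat_def)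
  have AL: "mat_img A (Lambda_q q) = mat_img (g_mat c (?N$1$2)) (Lambda_q q)"
    using mat_img_mult[of A M "Lambda_q q"] mat_img_G[OF M(1)] Ng by simp
  define d0 where "d0 = ?N$1$2"
  have lpos: "0 < lambda_q q" using lambda_ge1[OF q3] by simp
  define n where "n = floor ((1 - d0) / (c * lambda_q q))"
  have cl: "0 < c * lambda_q q" using c lpos by simp
  have f1: "real_of_int n \<le> (1 - d0) / (c * lambda_q q)" unfolding n_def by linarith
  have f2: "(1 - d0) / (c * lambda_q q) < real_of_int n + 1" unfolding n_def by linarith
  have n1: "real_of_int n * (c * lambda_q q) \<le> 1 - d0"
    using cl f1 by (simp add: le_divide_eq)
  have n2: "1 - d0 < (real_of_int n + 1) * (c * lambda_q q)"
    using cl f2 by (simp add: divide_less_eq)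
  have "(c, d0 + real_of_int n * c * lambda_q q) \<in> farey_tri q"
    using n1 n2 c by (simp add: farey_tri_def algebra_simps)
  then show ?thesis using AL g_shift[of c d0 n] unfolding d0_def by blast
qed

lemma tri_unique:
  assumes "(a, b) \<in> farey_tri q" "(a', b') \<in> farey_tri q"
    and eq: "mat_img (g_mat a b) (Lambda_q q) = mat_img (g_mat a' b') (Lambda_q q)"
  shows "a = a' \<and> b = b'"
proof -
  have a: "0 < a" "a \<le> 1" "1 - lambda_q q * a < b" "b \<le> 1" and a': "0 < a'" "a' \<le> 1" "1 - lambda_q q * a' < b'" "b' \<le> 1"
    using assms by (auto simp: farey_tri_def)
  have "vec2 a 0 \<in> mat_img (g_mat a' b') (Lambda_q q)"
    using eq e1_in unfolding mat_img_def by (metis g_e1 image_eqI)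
  then obtain v where v: "v \<in> Lambda_q q" "vec2 a 0 = g_mat a' b' *v v" by (auto simp: mat_img_mem)
  then have "vec2 a 0 = vec2 (a' * v$1 + b' * v$2) (inverse a' * v$2)" by (metis g_vec vec2_eta)
  then have v2: "v$2 = 0" and av: "a = a' * v$1 + b' * v$2" using a' by (auto simp: vec2_eq_iff)
  have "vec2 (v$1) 0 \<in> Lambda_q q" using v(1) v2 by (metis vec2_eta)
  then have "v$1 = 1 \<or> v$1 = -1" using Lambda_horiz[OF q3] by blast
  then have aa: "a = a'" using av v2 a a' by auto
  have "vec2 b (inverse a) \<in> mat_img (g_mat a' b') (Lambda_q q)"
    using eq e2_in unfolding mat_img_def by (metis g_vec image_eqI mult_zero_right mult_1_right add_0 mult_1_right)
  then obtain w where w: "w \<in> Lambda_q q" "vec2 b (inverse a) = g_mat a' b' *v w" by (auto simp: mat_img_mem)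
  then have "vec2 b (inverse a) = vec2 (a' * w$1 + b' * w$2) (inverse a' * w$2)" by (metis g_vec vec2_eta)
  then have w2: "w$2 = 1" and bw: "b = a' * w$1 + b'" using a a' aa by (auto simp: vec2_eq_iff)
  have "vec2 (w$1) 1 \<in> Lambda_q q" using w(1) w2 by (metis vec2_eta)
  then obtain n where n: "w$1 = real_of_int n * lambda_q q" using Lambda_y1[OF q3] by blast
  have lpos: "0 < lambda_q q" using lambda_ge1[OF q3] by simp
  have bb: "b - b' = real_of_int n * (a * lambda_q q)" using bw n aa by simp
  have "\<bar>b - b'\<bar> < a * lambda_q q" using a a' aa by (simp add: abs_less_iff algebra_simps)
  then have "\<bar>real_of_int n\<bar> * (a * lambda_q q) < 1 * (a * lambda_q q)"
    unfolding bb using a lpos by (simp add: abs_mult)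
  then have "\<bar>real_of_int n\<bar> < 1" using a lpos by (simp add: mult_less_cancel_right)
  then have "n = 0" by linarith
  then show ?thesis using aa bb by simp
qed

end

definition Sl :: "nat \<Rightarrow> real^2^2 \<Rightarrow> real set" where
  "Sl q A = {w$2 / w$1 | w. w \<in> mat_img A (Lambda_q q) \<inter> S1}"

lemma pos_slopes_eq: "pos_slopes q a b = {\<sigma> \<in> Sl q (g_mat a b). 0 < \<sigma>}"
  unfolding pos_slopes_def Sl_def by auto

lemma Uit_Lambda: "v \<in> Lambda_q q \<Longrightarrow> Uit q n v \<in> Lambda_q q"
  by (induction n) (auto simp: Uit_Suc intro: Lambda_closed[OF Um_in])

lemma det_hg: "0 < a \<Longrightarrow> (h_mat s ** g_mat a b)$1$1 * (h_mat s ** g_mat a b)$2$2 - (h_mat s ** g_mat a b)$1$2 * (h_mat s ** g_mat a b)$2$1 = 1"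
  by (simp add: h_mat_def g_mat_def mat2_mult field_simps)

context
  fixes q :: nat
  assumes q3: "q \<ge> 3"
begin

lemma Uit_e1: "Uit q j e1 = vec2 (sq q (int j + 1)) (sq q (int j))"
  by (simp add: Uit_formula[OF q3])

lemma sq_2: "sq q 2 = lambda_q q"
  using sq_rec_gen[OF q3, of 2 0 1] sq_1[OF q3] sq_0[OF q3] by simp

lemma pos_exists:
  assumes ab: "(a, b) \<in> farey_tri q"
  shows "\<exists>\<sigma>. \<sigma> \<in> pos_slopes q a b"
proof -
  have a: "0 < a" "a \<le> 1" "1 - lambda_q q * a < b" "b \<le> 1" using ab by (auto simp: farey_tri_def)
  show ?thesis
  proof (cases "0 < b")
    case True
    have "g_mat a b *v vec2 0 1 = vec2 b (inverse a)" by (simp add: g_vec)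
    then have "vec2 b (inverse a) \<in> mat_img (g_mat a b) (Lambda_q q) \<inter> S1"
      using e2_in a True unfolding mat_img_def S1_def by (auto intro!: image_eqI[of _ _ "vec2 0 1"])
    moreover have "0 < inverse a / b" using a True by simp
    ultimately show ?thesis unfolding pos_slopes_def by fastforce
  next
    case False
    define \<phi> where "\<phi> j = a * sq q (int j + 1) + b * sq q (int j)" for j :: nat
    define J where "J = {j. j < q \<and> 0 < \<phi> j}"
    have "\<phi> 1 = a * lambda_q q + b" unfolding \<phi>_def using sq_2 sq_1[OF q3] by simp
    then have "1 \<in> J" unfolding J_def using a q3 by (simp add: algebra_simps)
    have finJ: "finite J" unfolding J_def by simp
    define j0 where "j0 = Max J"
    have j0J: "j0 \<in> J" unfolding j0_def using finJ \<open>1 \<in> J\<close> by (intro Max_in) auto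
    have j0ge: "1 \<le> j0" unfolding j0_def using finJ \<open>1 \<in> J\<close> by (simp add: Max_ge)
    have "\<phi> (q - 1) = b"
    proof -
      have "int (q - 1) + 1 = int q" "int (q - 1) = int q - 1" using q3 by auto
      then show ?thesis unfolding \<phi>_def using sq_q[OF q3] sq_qm1[OF q3] by simp
    qed
    then have "q - 1 \<notin> J" using False unfolding J_def by simp
    then have j0lt: "j0 + 1 < q" using j0J unfolding J_def by (metis (mono_tags, lifting) Suc_eq_plus1 Suc_lessI diff_Suc_1 mem_Collect_eq)
    have "\<not> j0 + 1 \<le> j0" by simp
    then have "j0 + 1 \<notin> J" unfolding j0_def using finJ Max_ge by blast
    then have phi1: "\<phi> (j0 + 1) \<le> 0" using j0lt unfolding J_def by simp
    have phi0: "0 < \<phi> j0" using j0J unfolding J_def by simp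
    have ident: "sq q (int j0 + 1) * \<phi> j0 - sq q (int j0) * \<phi> (j0 + 1) = a"
    proof -
      have "int (j0 + 1) + 1 = int j0 + 2" "int (j0 + 1) = int j0 + 1" by auto
      then have "sq q (int j0 + 1) * \<phi> j0 - sq q (int j0) * \<phi> (j0 + 1)
          = a * (sq q (int j0 + 1)^2 - sq q (int j0) * sq q (int j0 + 2))"
        unfolding \<phi>_def by (simp add: algebra_simps power2_eq_square)
      then show ?thesis using sq_det[OF q3, of j0] by simp
    qed
    have s1: "1 \<le> sq q (int j0 + 1)" using j0lt q3 by (intro sq_ge1[OF q3]) auto
    have s0: "1 \<le> sq q (int j0)" using j0lt j0ge by (intro sq_ge1[OF q3]) auto
    have "sq q (int j0) * \<phi> (j0 + 1) \<le> 0" using s0 phi1 by (simp add: mult_nonneg_nonpos)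
    then have "sq q (int j0 + 1) * \<phi> j0 \<le> 1" using ident a by linarith
    moreover have "1 * \<phi> j0 \<le> sq q (int j0 + 1) * \<phi> j0" using s1 phi0 by (intro mult_right_mono) auto
    ultimately have phile: "\<phi> j0 \<le> 1" by simp
    have w: "g_mat a b *v Uit q j0 e1 = vec2 (\<phi> j0) (inverse a * sq q (int j0))"
      unfolding Uit_e1 g_vec \<phi>_def by simp
    have "vec2 (\<phi> j0) (inverse a * sq q (int j0)) \<in> mat_img (g_mat a b) (Lambda_q q) \<inter> S1"
      using w Uit_Lambda[OF e1_in, of q j0] phi0 phile unfolding mat_img_def S1_def by (auto intro!: image_eqI[of _ _ "Uit q j0 e1"])
    moreover have "0 < inverse a * sq q (int j0) / \<phi> j0" using a s0 phi0 by simp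
    ultimately show ?thesis unfolding pos_slopes_def by fastforce
  qed
qed

lemma slopes_finite:
  assumes a: "0 < a"
  shows "finite {\<sigma> \<in> Sl q (g_mat a b). 0 < \<sigma> \<and> \<sigma> \<le> M}"
proof -
  define R where "R = (1 + a * \<bar>b\<bar> * \<bar>M\<bar>) / a + a * \<bar>M\<bar>"
  let ?f = "\<lambda>v. (g_mat a b *v v)$2 / (g_mat a b *v v)$1"
  have "{\<sigma> \<in> Sl q (g_mat a b). 0 < \<sigma> \<and> \<sigma> \<le> M} \<subseteq> ?f ` (Lambda_q q \<inter> cball 0 R)"
  proof
    fix \<sigma> assume "\<sigma> \<in> {\<sigma> \<in> Sl q (g_mat a b). 0 < \<sigma> \<and> \<sigma> \<le> M}"
    then obtain w where wS: "w \<in> mat_img (g_mat a b) (Lambda_q q)" "w \<in> S1" "\<sigma> = w$2 / w$1" "0 < \<sigma>" "\<sigma> \<le> M"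
      unfolding Sl_def by blast
    then obtain v where vv: "v \<in> Lambda_q q" "w = g_mat a b *v v" unfolding mat_img_mem by blast
    have v: "v \<in> Lambda_q q" "g_mat a b *v v \<in> S1" "\<sigma> = ?f v" "0 < ?f v" "?f v \<le> M"
      using wS vv by simp_all
    obtain x y where xy: "v = vec2 x y" using vec2_eta by blast
    let ?w1 = "a * x + b * y" and ?w2 = "inverse a * y"
    have gw: "g_mat a b *v v = vec2 ?w1 ?w2" unfolding xy g_vec ..
    have w1: "0 < ?w1" "?w1 \<le> 1" using v(2) gw by (auto simp: S1_def)
    have q1: "0 < ?w2 / ?w1" "?w2 / ?w1 \<le> M" using v(4,5) unfolding gw vec2_nth by simp_all
    have w2: "0 < ?w2" using q1(1) w1(1) by (simp add: zero_less_divide_iff)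
    have "?w2 \<le> M * ?w1" using q1(2) w1(1) by (simp add: divide_le_eq)
    have "M * ?w1 \<le> \<bar>M\<bar> * 1" using w1 by (intro mult_mono) auto
    then have w2M: "?w2 \<le> \<bar>M\<bar>" using \<open>?w2 \<le> M * ?w1\<close> by linarith
    have yv: "a * ?w2 = y" using a by simp
    have "\<bar>y\<bar> = a * ?w2" using yv a w2 by (metis abs_of_pos mult_pos_pos)
    also have "\<dots> \<le> a * \<bar>M\<bar>" using a w2M by (intro mult_left_mono) auto
    finally have ya: "\<bar>y\<bar> \<le> a * \<bar>M\<bar>" .
    have xv: "?w1 - b * y = a * x" by simp
    have "\<bar>?w1 - b * y\<bar> \<le> 1 + \<bar>b\<bar> * (a * \<bar>M\<bar>)"
    proof -
      have "\<bar>?w1 - b * y\<bar> \<le> \<bar>?w1\<bar> + \<bar>b * y\<bar>" by (rule abs_triangle_ineq4)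
      also have "\<dots> \<le> 1 + \<bar>b\<bar> * (a * \<bar>M\<bar>)"
      proof -
        have "\<bar>b\<bar> * \<bar>y\<bar> \<le> \<bar>b\<bar> * (a * \<bar>M\<bar>)" using ya by (intro mult_left_mono) auto
        then show ?thesis using w1 by (simp add: abs_mult)
      qed
      finally show ?thesis .
    qed
    then have "a * \<bar>x\<bar> \<le> 1 + a * \<bar>b\<bar> * \<bar>M\<bar>" unfolding xv using a by (simp add: abs_mult algebra_simps)
    then have xa: "\<bar>x\<bar> \<le> (1 + a * \<bar>b\<bar> * \<bar>M\<bar>) / a" using a by (simp add: pos_le_divide_eq mult.commute)
    have "norm v \<le> \<bar>x\<bar> + \<bar>y\<bar>" using norm_le_l1_cart[of v] unfolding xy by (simp add: sum_2)
    then have "norm v \<le> R" unfolding R_def using xa ya by linarith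
    then show "\<sigma> \<in> ?f ` (Lambda_q q \<inter> cball 0 R)" using v(1,3) by (intro image_eqI[of _ _ v]) auto
  qed
  moreover have "finite (?f ` (Lambda_q q \<inter> cball 0 R))" by (intro finite_imageI Lambda_finite[OF q3])
  ultimately show ?thesis by (rule finite_subset)
qed

lemma R_min:
  assumes ab: "(a, b) \<in> farey_tri q"
  shows "R_q q a b \<in> pos_slopes q a b \<and> (\<forall>t\<in>pos_slopes q a b. R_q q a b \<le> t)"
proof -
  have a: "0 < a" using ab by (auto simp: farey_tri_def)
  obtain \<sigma>0 where s0: "\<sigma>0 \<in> pos_slopes q a b" using pos_exists[OF ab] by blast
  define F where "F = {\<sigma> \<in> pos_slopes q a b. \<sigma> \<le> \<sigma>0}"
  have "F = {\<sigma> \<in> Sl q (g_mat a b). 0 < \<sigma> \<and> \<sigma> \<le> \<sigma>0}" unfolding F_def pos_slopes_eq by auto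
  then have finF: "finite F" using slopes_finite[OF a] by simp
  have "\<sigma>0 \<in> F" using s0 unfolding F_def by simp
  define m where "m = Min F"
  have mF: "m \<in> F" unfolding m_def using finF \<open>\<sigma>0 \<in> F\<close> by (intro Min_in) auto
  have mle: "\<forall>t\<in>pos_slopes q a b. m \<le> t"
  proof
    fix t assume t: "t \<in> pos_slopes q a b"
    show "m \<le> t"
    proof (cases "t \<le> \<sigma>0")
      case True then have "t \<in> F" using t unfolding F_def by simp
      then show ?thesis unfolding m_def using finF by simp
    next
      case False then show ?thesis using mF unfolding F_def by auto
    qed
  qed
  have mP: "m \<in> pos_slopes q a b" using mF unfolding F_def by simp
  have "R_q q a b = m" unfolding R_q_def
  proof (rule the_equality)
    show "m \<in> pos_slopes q a b \<and> (\<forall>t\<in>pos_slopes q a b. m \<le> t)" using mP mle by simp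
    fix s assume "s \<in> pos_slopes q a b \<and> (\<forall>t\<in>pos_slopes q a b. s \<le> t)"
    then show "s = m" using mP mle by (meson order_antisym)
  qed
  then show ?thesis using mP mle by simp
qed

lemma BCZ_step:
  assumes ab: "(a, b) \<in> farey_tri q"
  shows "0 < R_q q a b \<and> BCZ_q q (a, b) \<in> farey_tri q
     \<and> mat_img (g_mat (fst (BCZ_q q (a, b))) (snd (BCZ_q q (a, b)))) (Lambda_q q)
         = mat_img (h_mat (R_q q a b) ** g_mat a b) (Lambda_q q)"
proof -
  have a: "0 < a" using ab by (auto simp: farey_tri_def)
  let ?R = "R_q q a b"
  have Rm: "?R \<in> pos_slopes q a b" using R_min[OF ab] by simp
  then obtain w where w: "w \<in> mat_img (g_mat a b) (Lambda_q q) \<inter> S1" "?R = w$2 / w$1" "0 < w$2 / w$1"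
    unfolding pos_slopes_def by auto
  have w1: "0 < w$1" "w$1 \<le> 1" using w(1) by (auto simp: S1_def)
  have "h_mat ?R *v w = vec2 (w$1) (w$2 - ?R * w$1)" by (subst vec2_eta[of w]) (simp add: h_vec)
  also have "\<dots> = vec2 (w$1) 0" using w(2) w1 by simp
  finally have hw: "h_mat ?R *v w = vec2 (w$1) 0" .
  have "vec2 (w$1) 0 \<in> mat_img (h_mat ?R ** g_mat a b) (Lambda_q q)"
    unfolding mat_img_mult using w(1) hw unfolding mat_img_def by (metis IntD1 image_eqI)
  then obtain d where d: "(w$1, d) \<in> farey_tri q" "mat_img (h_mat ?R ** g_mat a b) (Lambda_q q) = mat_img (g_mat (w$1) d) (Lambda_q q)"
    using tri_exists[OF q3 det_hg[OF a]] w1 by blast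
  have "BCZ_q q (a, b) = (w$1, d)" unfolding BCZ_q_def
  proof (simp only: case_prod_conv, rule the_equality)
    show "(w$1, d) \<in> farey_tri q \<and> mat_img (h_mat ?R ** g_mat a b) (Lambda_q q) = mat_img (g_mat (fst (w$1, d)) (snd (w$1, d))) (Lambda_q q)"
      using d by simp
    fix cd assume cd: "cd \<in> farey_tri q \<and> mat_img (h_mat ?R ** g_mat a b) (Lambda_q q) = mat_img (g_mat (fst cd) (snd cd)) (Lambda_q q)"
    then have "(fst cd, snd cd) \<in> farey_tri q" by simp
    from tri_unique[OF q3 this d(1)] cd d(2) show "cd = (w$1, d)" by (metis prod.collapse)
  qed
  then show ?thesis using d Rm unfolding pos_slopes_def by auto
qed

end

lemma mat_img_cong: "A = B \<Longrightarrow> mat_img A X = mat_img B X" by simp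

definition Pm :: "real \<Rightarrow> real^2 \<Rightarrow> real^2 \<Rightarrow> real^2" where
  "Pm s w x = x + (s * det2 w x) *\<^sub>R w"

lemma Pm_vec2: "Pm s (vec2 w1 w2) (vec2 x1 x2) = vec2 (x1 + s * (w1 * x2 - w2 * x1) * w1) (x2 + s * (w1 * x2 - w2 * x1) * w2)"
  by (simp add: Pm_def det2_def vec_eq_iff forall_2 vec2_def)

lemma g_Pm: "0 < a \<Longrightarrow> g_mat a b *v Pm s (vec2 (-b) a) x = h_mat s *v (g_mat a b *v x)"
  by (rule vec2_cases[of _ x]) (simp add: Pm_vec2 g_vec h_vec vec2_eq_iff field_simps)

lemma g_inj: "0 < a \<Longrightarrow> g_mat a b *v x = g_mat a b *v y \<Longrightarrow> x = y"
proof -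
  assume a: "0 < a" and e: "g_mat a b *v x = g_mat a b *v y"
  obtain x1 x2 y1 y2 where xy: "x = vec2 x1 x2" "y = vec2 y1 y2" by (metis vec2_eta)
  from e have "a * x1 + b * x2 = a * y1 + b * y2" "inverse a * x2 = inverse a * y2" unfolding xy g_vec vec2_eq_iff by auto
  then have "x2 = y2" "x1 = y1" using a by auto
  then show ?thesis using xy by simp
qed

lemma M_Pm:
  assumes "M$1$1 * M$2$2 - M$1$2 * M$2$1 = 1"
  shows "M *v Pm s w x = M *v x + (s * det2 (M *v w) (M *v x)) *\<^sub>R (M *v w)"
proof -
  obtain w1 w2 x1 x2 where wx: "w = vec2 w1 w2" "x = vec2 x1 x2" by (metis vec2_eta)
  have d: "det2 (M *v w) (M *v x) = det2 w x"
    unfolding wx using assms by (subst (1 2) mat2_eta[of M]) (simp add: mat2_vec det2_def algebra_simps)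
  show ?thesis unfolding d unfolding Pm_def
    by (simp add: matrix_vector_right_distrib matrix_vector_mult_scaleR)
qed

lemma conjT: "\<alpha> * \<delta> - \<beta> * \<gamma> = 1 \<Longrightarrow> (mat2 \<alpha> \<beta> \<gamma> \<delta> ** T_mat q ** adj (mat2 \<alpha> \<beta> \<gamma> \<delta>)) *v vec2 x1 x2
   = vec2 (x1 + lambda_q q * \<alpha> * (\<alpha> * x2 - \<gamma> * x1)) (x2 + lambda_q q * \<gamma> * (\<alpha> * x2 - \<gamma> * x1))"
  by (simp add: mat2_mult mat2_vec adj_def T_mat_def vec2_eq_iff algebra_simps)

context
  fixes q :: nat
  assumes q3: "q \<ge> 3"
begin

lemma iter:
  assumes ab: "(a, b) \<in> farey_tri q"
  shows "(BCZ_q q ^^ n) (a, b) \<in> farey_tri q \<and> (\<exists>s. 0 \<le> s \<and> (1 \<le> n \<longrightarrow> 0 < s) \<and>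
     mat_img (g_mat (fst ((BCZ_q q ^^ n) (a, b))) (snd ((BCZ_q q ^^ n) (a, b)))) (Lambda_q q) = mat_img (h_mat s ** g_mat a b) (Lambda_q q))"
proof (induction n)
  case 0 then show ?case using ab by (auto simp: h_0 matrix_mul_lid intro!: exI[of _ 0])
next
  case (Suc n)
  obtain c d where cd: "(BCZ_q q ^^ n) (a, b) = (c, d)" by fastforce
  from Suc cd obtain s where cdT: "(c, d) \<in> farey_tri q" and s: "0 \<le> s" "mat_img (g_mat c d) (Lambda_q q) = mat_img (h_mat s ** g_mat a b) (Lambda_q q)"
    by auto
  note st = BCZ_step[OF q3 cdT]
  have e: "(BCZ_q q ^^ Suc n) (a, b) = BCZ_q q (c, d)" using cd by simp
  have "mat_img (g_mat (fst (BCZ_q q (c, d))) (snd (BCZ_q q (c, d)))) (Lambda_q q)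
       = mat_img (h_mat (R_q q c d)) (mat_img (h_mat s ** g_mat a b) (Lambda_q q))"
    using st s(2) by (simp add: mat_img_mult)
  also have "\<dots> = mat_img (h_mat (R_q q c d + s) ** g_mat a b) (Lambda_q q)"
    by (simp add: mat_img_mult[symmetric] matrix_mul_assoc h_add)
  finally show ?case unfolding e using st s(1) by (intro conjI exI[of _ "R_q q c d + s"]) auto
qed

lemma one_imp_two:
  assumes ab: "(a, b) \<in> farey_tri q" and n: "1 \<le> n" "(BCZ_q q ^^ n) (a, b) = (a, b)"
  shows "\<exists>s0>0. mat_img (h_mat s0 ** g_mat a b) (Lambda_q q) = mat_img (g_mat a b) (Lambda_q q)"
  using iter[OF ab, of n] n by auto

lemma three_imp_two:
  assumes ab: "(a, b) \<in> farey_tri q" and v: "v \<in> Lambda_q q" "v$2 \<noteq> 0" "b / a = v$1 / v$2"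
  shows "\<exists>s0>0. mat_img (h_mat s0 ** g_mat a b) (Lambda_q q) = mat_img (g_mat a b) (Lambda_q q)"
proof -
  have a: "0 < a" using ab by (auto simp: farey_tri_def)
  have lpos: "0 < lambda_q q" using lambda_ge1[OF q3] by simp
  obtain v1 v2 where vv: "v = vec2 v1 v2" by (metis vec2_eta)
  have v2: "v2 \<noteq> 0" using v(2) vv by simp
  have bv: "b = a * v1 / v2" using v(3) vv a v2 by (simp add: field_simps)
  have "vec2 (-v1) v2 \<in> Lambda_q q" using Lambda_D v(1) vv by simp
  then obtain M where M: "M \<in> G_q q" "vec2 (-v1) v2 = M *v e1" by (auto simp: Lambda_iff)
  have Mc: "M$1$1 = -v1" "M$2$1 = v2" using M(2) unfolding Me1 by (simp_all add: vec2_eq_iff)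
  have dM: "M$1$1 * M$2$2 - M$1$2 * M$2$1 = 1" by (rule G_det[OF M(1)])
  define N where "N = M ** T_mat q ** adj M"
  have NG: "N \<in> G_q q" unfolding N_def by (intro G_mult M(1) T_in G_adj)
  define t where "t = a / v2"
  define s where "s = lambda_q q / t^2"
  have tnz: "t \<noteq> 0" unfolding t_def using a v2 by simp
  have spos: "0 < s" unfolding s_def using lpos tnz by simp
  have eqN: "h_mat s ** g_mat a b = g_mat a b ** N"
  proof -
    have "(h_mat s ** g_mat a b) *v x = (g_mat a b ** N) *v x" for x
    proof -
      obtain x1 x2 where x: "x = vec2 x1 x2" by (metis vec2_eta)
      have Nx: "N *v x = vec2 (x1 + lambda_q q * (-v1) * ((-v1) * x2 - v2 * x1)) (x2 + lambda_q q * v2 * ((-v1) * x2 - v2 * x1))"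
        using conjT[OF dM, of q x1 x2] Mc unfolding N_def x mat2_eta[of M, symmetric] by simp
      have st: "s * t^2 = lambda_q q" unfolding s_def using tnz by simp
      have "(g_mat a b ** N) *v x = g_mat a b *v (N *v x)" by (simp add: matrix_vector_mul_assoc)
      also have "\<dots> = (h_mat s ** g_mat a b) *v x"
        unfolding Nx unfolding x bv g_vec h_vec matrix_vector_mul_assoc[symmetric] vec2_eq_iff
        using st a v2 unfolding t_def by (simp add: field_simps power2_eq_square) algebra?
      finally show ?thesis by simp
    qed
    then show ?thesis by (simp add: matrix_eq)
  qed
  have "mat_img (h_mat s ** g_mat a b) (Lambda_q q) = mat_img (g_mat a b) (Lambda_q q)"
    unfolding eqN mat_img_mult mat_img_G[OF NG] ..
  then show ?thesis using spos by blast
qed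

end

lemma Tpow_gen_nat:
  assumes T: "\<And>z. z \<in> X \<Longrightarrow> T_mat q *v z \<in> X" and Ti: "\<And>z. z \<in> X \<Longrightarrow> Tinv q *v z \<in> X"
  shows "vec2 x y \<in> X \<Longrightarrow> vec2 (x + real n * lambda_q q * y) y \<in> X \<and> vec2 (x - real n * lambda_q q * y) y \<in> X"
proof (induction n)
  case 0 then show ?case by simp
next
  case (Suc n)
  then have a: "vec2 (x + real n * lambda_q q * y) y \<in> X" and b: "vec2 (x - real n * lambda_q q * y) y \<in> X" by auto
  from T[OF a] Ti[OF b]
  show ?case by (simp add: T_vec Tinv_vec algebra_simps)
qed

lemma Tpow_gen:
  assumes T: "\<And>z. z \<in> X \<Longrightarrow> T_mat q *v z \<in> X" and Ti: "\<And>z. z \<in> X \<Longrightarrow> Tinv q *v z \<in> X"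
    and a: "vec2 x y \<in> X"
  shows "vec2 (x + real_of_int m * lambda_q q * y) y \<in> X"
proof -
  define n where "n = nat \<bar>m\<bar>"
  have "m = int n \<or> m = - int n" unfolding n_def by arith
  then show ?thesis using Tpow_gen_nat[OF T Ti a, of n] by auto
qed

context
  fixes q :: nat
  assumes q3: "q \<ge> 3"
begin

lemma two_imp_three:
  assumes ab: "(a, b) \<in> farey_tri q" and s0: "0 < s0"
    and eq: "mat_img (h_mat s0 ** g_mat a b) (Lambda_q q) = mat_img (g_mat a b) (Lambda_q q)"
  shows "\<exists>v \<in> Lambda_q q. v$2 \<noteq> 0 \<and> b / a = v$1 / v$2"
proof -
  have a: "0 < a" using ab by (auto simp: farey_tri_def)
  have lpos: "0 < lambda_q q" using lambda_ge1[OF q3] by simp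
  have l2: "lambda_q q < 2" using lambda_lt2[OF q3] .
  define w where "w = vec2 (-b) a"
  have PL: "Pm s0 w x \<in> Lambda_q q" if x: "x \<in> Lambda_q q" for x
  proof -
    have "h_mat s0 *v (g_mat a b *v x) \<in> mat_img (h_mat s0 ** g_mat a b) (Lambda_q q)"
      using x unfolding mat_img_def by (simp add: matrix_vector_mul_assoc[symmetric])
    then have "h_mat s0 *v (g_mat a b *v x) \<in> mat_img (g_mat a b) (Lambda_q q)" using eq by simp
    then obtain y where y: "y \<in> Lambda_q q" "h_mat s0 *v (g_mat a b *v x) = g_mat a b *v y" by (auto simp: mat_img_mem)
    then have "g_mat a b *v Pm s0 w x = g_mat a b *v y" unfolding w_def using g_Pm[OF a] by simp
    then have "Pm s0 w x = y" using g_inj[OF a] by blast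
    then show ?thesis using y by simp
  qed
  define Orb where "Orb = {M *v w | M. M \<in> G_q q}"
  have OG: "N *v u \<in> Orb" if "N \<in> G_q q" "u \<in> Orb" for N u
    using that unfolding Orb_def by (auto simp: matrix_vector_mul_assoc intro: G_mult)
  have OK: "u$2 = 0 \<or> 1 \<le> s0 * (u$2)^2" if u: "u \<in> Orb" for u
  proof -
    obtain M where M: "M \<in> G_q q" "u = M *v w" using u unfolding Orb_def by blast
    have dM: "M$1$1 * M$2$2 - M$1$2 * M$2$1 = 1" by (rule G_det[OF M(1)])
    define x where "x = adj M *v e1"
    have xL: "x \<in> Lambda_q q" unfolding x_def by (rule Lambda_closed[OF G_adj[OF M(1)] e1_in])
    have Mx: "M *v x = e1" unfolding x_def using adj_right[OF M(1)] by (simp add: matrix_vector_mul_assoc matrix_vector_mul_lid)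
    have "M *v Pm s0 w x \<in> Lambda_q q" by (rule Lambda_closed[OF M(1) PL[OF xL]])
    also have "M *v Pm s0 w x = e1 + (s0 * det2 u e1) *\<^sub>R u" using M_Pm[OF dM] Mx M(2) by simp
    finally have "(e1 + (s0 * det2 u e1) *\<^sub>R u) \<in> Lambda_q q" .
    moreover have "(e1 + (s0 * det2 u e1) *\<^sub>R u)$2 = - (s0 * (u$2)^2)" by (simp add: det2_def power2_eq_square)
    ultimately have "- (s0 * (u$2)^2) = 0 \<or> 1 \<le> \<bar>- (s0 * (u$2)^2)\<bar>" using Lambda_K[OF q3] by metis
    then show ?thesis using s0 by auto
  qed
  have wO: "w \<in> Orb" unfolding Orb_def using G_q.G_id[of q] by (force simp: matrix_vector_mul_lid)
  have desc: "\<exists>u\<in>Orb. \<bar>u$2\<bar> \<le> (lambda_q q / 2)^k * a" for k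
  proof (induction k)
    case 0 then show ?case using wO a by (intro bexI[of _ w]) (auto simp: w_def)
  next
    case (Suc k)
    then obtain u where u: "u \<in> Orb" "\<bar>u$2\<bar> \<le> (lambda_q q / 2)^k * a" by blast
    show ?case
    proof (cases "u$2 = 0")
      case True then show ?thesis using u(1) a lpos by (intro bexI[of _ u]) auto
    next
      case False
      obtain u1 u2 where uu: "u = vec2 u1 u2" by (metis vec2_eta)
      have u2: "u2 \<noteq> 0" using False uu by simp
      define n where "n = round (- u1 / (lambda_q q * u2))"
      have r: "\<bar>real_of_int n - (- u1 / (lambda_q q * u2))\<bar> \<le> 1/2" unfolding n_def by (rule of_int_round_abs_le)
      have "u1 + real_of_int n * lambda_q q * u2 = (lambda_q q * u2) * (real_of_int n - (- u1 / (lambda_q q * u2)))"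
        using u2 lpos by (simp add: field_simps)
      then have "\<bar>u1 + real_of_int n * lambda_q q * u2\<bar> = (lambda_q q * \<bar>u2\<bar>) * \<bar>real_of_int n - (- u1 / (lambda_q q * u2))\<bar>"
        using lpos by (simp add: abs_mult)
      also have "\<dots> \<le> (lambda_q q * \<bar>u2\<bar>) * (1/2)" using r lpos by (intro mult_left_mono) auto
      finally have b1: "\<bar>u1 + real_of_int n * lambda_q q * u2\<bar> \<le> lambda_q q / 2 * \<bar>u2\<bar>" by simp
      have "\<bar>u2\<bar> \<le> (lambda_q q / 2)^k * a" using u(2) uu by simp
      then have "lambda_q q / 2 * \<bar>u2\<bar> \<le> lambda_q q / 2 * ((lambda_q q / 2)^k * a)" using lpos by (intro mult_left_mono) auto
      then have b2: "\<bar>u1 + real_of_int n * lambda_q q * u2\<bar> \<le> (lambda_q q / 2)^Suc k * a" using b1 by simp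
      have OT: "z \<in> Orb \<Longrightarrow> T_mat q *v z \<in> Orb" for z using OG T_in by blast
      have OTi: "z \<in> Orb \<Longrightarrow> Tinv q *v z \<in> Orb" for z using OG Tinv_in by blast
      have "vec2 (u1 + real_of_int n * lambda_q q * u2) u2 \<in> Orb" using Tpow_gen[OF OT OTi] u(1) uu by blast
      then have "S_mat *v vec2 (u1 + real_of_int n * lambda_q q * u2) u2 \<in> Orb" using OG S_in by blast
      then have "vec2 (- u2) (u1 + real_of_int n * lambda_q q * u2) \<in> Orb" by (simp add: S_vec)
      then show ?thesis using b2 by (intro bexI) auto
    qed
  qed
  have r1: "lambda_q q / 2 < 1" using l2 by simp
  obtain k where k: "(lambda_q q / 2)^k < 1 / (a * (s0 + 1))" using real_arch_pow_inv[OF _ r1, of "1 / (a * (s0 + 1))"] a s0 by auto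
  obtain u where u: "u \<in> Orb" "\<bar>u$2\<bar> \<le> (lambda_q q / 2)^k * a" using desc by blast
  define e where "e = (lambda_q q / 2)^k * a"
  have e0: "0 \<le> e" unfolding e_def using lpos a by simp
  have pos: "0 < a * (s0 + 1)" using a s0 by simp
  have m1: "(lambda_q q / 2)^k * (a * (s0 + 1)) < 1 / (a * (s0 + 1)) * (a * (s0 + 1))"
    using k pos by (rule mult_strict_right_mono)
  have m2: "1 / (a * (s0 + 1)) * (a * (s0 + 1)) = 1" using a s0 by simp
  have m3: "e * (s0 + 1) = (lambda_q q / 2)^k * (a * (s0 + 1))" by (simp only: e_def mult.assoc)
  have es: "e * (s0 + 1) < 1" unfolding m3 using m1 m2 by linarith
  have ee: "e * (s0 + 1) = s0 * e + e" by (simp add: algebra_simps)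
  have e1: "e < 1" using es ee e0 s0 by (smt (verit) mult_nonneg_nonneg)
  have u20: "u$2 = 0"
  proof (rule ccontr)
    assume "u$2 \<noteq> 0"
    then have c1: "1 \<le> s0 * (u$2)^2" using OK[OF u(1)] by simp
    have "\<bar>u$2\<bar>^2 \<le> e^2" using u(2) unfolding e_def by (intro power_mono) auto
    then have "(u$2)^2 \<le> e^2" by simp
    then have c2: "s0 * (u$2)^2 \<le> s0 * e^2" using s0 by (intro mult_left_mono) auto
    have "e^2 \<le> e" using e0 e1 by (simp add: power2_eq_square mult_left_le)
    then have c3: "s0 * e^2 \<le> s0 * e" using s0 by (intro mult_left_mono) auto
    show False using c1 c2 c3 es ee e0 by linarith
  qed
  obtain M where M: "M \<in> G_q q" "u = M *v w" using u(1) unfolding Orb_def by blast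
  define v where "v = adj M *v e1"
  have vL: "v \<in> Lambda_q q" unfolding v_def by (rule Lambda_closed[OF G_adj[OF M(1)] e1_in])
  have "w = adj M *v u" using M adj_left[OF M(1)] by (simp add: matrix_vector_mul_assoc matrix_vector_mul_lid)
  also have "u = (u$1) *\<^sub>R e1" using u20 by (subst vec2_eta[of u]) (simp add: vec_eq_iff forall_2)
  finally have "w = (u$1) *\<^sub>R v" unfolding v_def by (simp add: matrix_vector_mult_scaleR)
  then have wv: "-b = u$1 * v$1" "a = u$1 * v$2" unfolding w_def by (simp_all add: vec_eq_iff forall_2)
  have v2: "v$2 \<noteq> 0" using wv(2) a by auto
  have u1: "u$1 \<noteq> 0" using wv(2) a by auto
  have "vec2 (- (v$1)) (v$2) \<in> Lambda_q q" using Lambda_D vL vec2_eta[of v] by metis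
  moreover have "b / a = (- (v$1)) / v$2" using wv u1 v2 by (simp add: field_simps)
  ultimately show ?thesis using v2 by (intro bexI[of _ "vec2 (- (v$1)) (v$2)"]) auto
qed

end

context
  fixes q :: nat
  assumes q3: "q \<ge> 3"
begin

lemma shift_slopes:
  assumes eq: "mat_img (g_mat c d) (Lambda_q q) = mat_img (h_mat \<sigma> ** g_mat a b) (Lambda_q q)"
  shows "pos_slopes q c d = {\<tau> - \<sigma> | \<tau>. \<tau> \<in> Sl q (g_mat a b) \<and> \<sigma> < \<tau>}"
proof -
  have img: "mat_img (g_mat c d) (Lambda_q q) = (\<lambda>u. h_mat \<sigma> *v u) ` mat_img (g_mat a b) (Lambda_q q)"
    unfolding eq mat_img_mult by (simp add: mat_img_def)
  show ?thesis
  proof (intro set_eqI iffI)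
    fix x assume "x \<in> pos_slopes q c d"
    then obtain w where w: "w \<in> mat_img (g_mat c d) (Lambda_q q)" "w \<in> S1" "x = w$2 / w$1" "0 < w$2 / w$1"
      unfolding pos_slopes_def by blast
    then obtain u where u: "u \<in> mat_img (g_mat a b) (Lambda_q q)" "w = h_mat \<sigma> *v u" unfolding img by blast
    obtain u1 u2 where uu: "u = vec2 u1 u2" by (metis vec2_eta)
    have wu: "w = vec2 u1 (u2 - \<sigma> * u1)" using u(2) uu by (simp add: h_vec)
    have u1: "0 < u1" "u1 \<le> 1" using w(2) wu by (auto simp: S1_def)
    have xs: "x = u2 / u1 - \<sigma>" using w(3) wu u1 by (simp add: field_simps)
    have "u2 / u1 \<in> Sl q (g_mat a b)" unfolding Sl_def using u(1) uu u1 by (auto simp: S1_def intro!: exI[of _ "vec2 u1 u2"])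
    moreover have "\<sigma> < u2 / u1" using w(4) xs w(3) by simp
    ultimately show "x \<in> {\<tau> - \<sigma> | \<tau>. \<tau> \<in> Sl q (g_mat a b) \<and> \<sigma> < \<tau>}" using xs by blast
  next
    fix x assume "x \<in> {\<tau> - \<sigma> | \<tau>. \<tau> \<in> Sl q (g_mat a b) \<and> \<sigma> < \<tau>}"
    then obtain \<tau> where t: "x = \<tau> - \<sigma>" "\<tau> \<in> Sl q (g_mat a b)" "\<sigma> < \<tau>" by blast
    then obtain u where u: "u \<in> mat_img (g_mat a b) (Lambda_q q)" "u \<in> S1" "\<tau> = u$2 / u$1" unfolding Sl_def by blast
    obtain u1 u2 where uu: "u = vec2 u1 u2" by (metis vec2_eta)
    have u1: "0 < u1" "u1 \<le> 1" using u(2) uu by (auto simp: S1_def)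
    define w where "w = h_mat \<sigma> *v u"
    have wu: "w = vec2 u1 (u2 - \<sigma> * u1)" unfolding w_def uu by (simp add: h_vec)
    have wI: "w \<in> mat_img (g_mat c d) (Lambda_q q)" unfolding img w_def using u(1) by blast
    have "w$2 / w$1 = x" using wu u1 t(1) u(3) uu by (simp add: field_simps)
    moreover have "w \<in> S1" using wu u1 by (simp add: S1_def)
    moreover have "0 < x" using t by simp
    ultimately show "x \<in> pos_slopes q c d" unfolding pos_slopes_def using wI by force
  qed
qed

lemma two_imp_one:
  assumes ab: "(a, b) \<in> farey_tri q" and s0: "0 < s0"
    and eq: "mat_img (h_mat s0 ** g_mat a b) (Lambda_q q) = mat_img (g_mat a b) (Lambda_q q)"
  shows "\<exists>n::nat. n \<ge> 1 \<and> (BCZ_q q ^^ n) (a, b) = (a, b)"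
proof -
  have a: "0 < a" "a \<le> 1" using ab by (auto simp: farey_tri_def)
  define \<Sigma> where "\<Sigma> = Sl q (g_mat a b)"
  define A where "A \<sigma> = {\<tau> \<in> \<Sigma>. 0 < \<tau> \<and> \<tau> \<le> \<sigma>}" for \<sigma>
  have finA: "finite (A \<sigma>)" for \<sigma> unfolding A_def \<Sigma>_def by (rule slopes_finite[OF q3 a(1)])
  have inv: "\<exists>\<sigma>. 0 \<le> \<sigma> \<and> (BCZ_q q ^^ k) (a, b) \<in> farey_tri q \<and>
      mat_img (g_mat (fst ((BCZ_q q ^^ k) (a, b))) (snd ((BCZ_q q ^^ k) (a, b)))) (Lambda_q q) = mat_img (h_mat \<sigma> ** g_mat a b) (Lambda_q q)
      \<and> card (A \<sigma>) = k \<and> (0 < \<sigma> \<longrightarrow> \<sigma> \<in> \<Sigma>)" for k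
  proof (induction k)
    case 0
    have "A 0 = {}" unfolding A_def by auto
    then show ?case using ab by (intro exI[of _ 0]) (auto simp: h_0 matrix_mul_lid)
  next
    case (Suc k)
    then obtain \<sigma> where \<sigma>: "0 \<le> \<sigma>" "(BCZ_q q ^^ k) (a, b) \<in> farey_tri q"
      "mat_img (g_mat (fst ((BCZ_q q ^^ k) (a, b))) (snd ((BCZ_q q ^^ k) (a, b)))) (Lambda_q q) = mat_img (h_mat \<sigma> ** g_mat a b) (Lambda_q q)"
      "card (A \<sigma>) = k" by blast
    obtain c d where cd: "(BCZ_q q ^^ k) (a, b) = (c, d)" by fastforce
    have cdT: "(c, d) \<in> farey_tri q" using \<sigma>(2) cd by simp
    have eqc: "mat_img (g_mat c d) (Lambda_q q) = mat_img (h_mat \<sigma> ** g_mat a b) (Lambda_q q)" using \<sigma>(3) cd by simp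
    note st = BCZ_step[OF q3 cdT]
    note rm = R_min[OF q3 cdT]
    note sh = shift_slopes[OF eqc]
    let ?R = "R_q q c d"
    obtain \<tau>0 where t0: "?R = \<tau>0 - \<sigma>" "\<tau>0 \<in> \<Sigma>" "\<sigma> < \<tau>0" using rm sh unfolding \<Sigma>_def by auto
    have minR: "\<tau>0 \<le> \<tau>" if "\<tau> \<in> \<Sigma>" "\<sigma> < \<tau>" for \<tau>
    proof -
      have "\<tau> - \<sigma> \<in> pos_slopes q c d" using that sh unfolding \<Sigma>_def by blast
      then have "?R \<le> \<tau> - \<sigma>" using rm by blast
      then show ?thesis using t0 by simp
    qed
    have Anew: "A \<tau>0 = insert \<tau>0 (A \<sigma>)"
    proof (intro set_eqI iffI)
      fix x assume "x \<in> A \<tau>0"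
      then have x: "x \<in> \<Sigma>" "0 < x" "x \<le> \<tau>0" unfolding A_def by auto
      show "x \<in> insert \<tau>0 (A \<sigma>)"
      proof (cases "x \<le> \<sigma>")
        case True then show ?thesis using x unfolding A_def by auto
      next
        case False then have "\<tau>0 \<le> x" using minR x by simp
        then show ?thesis using x by simp
      qed
    next
      fix x assume "x \<in> insert \<tau>0 (A \<sigma>)"
      then show "x \<in> A \<tau>0" using t0 \<sigma>(1) unfolding A_def by auto
    qed
    have "\<tau>0 \<notin> A \<sigma>" using t0 unfolding A_def by auto
    then have cardA: "card (A \<tau>0) = Suc k" using Anew finA \<sigma>(4) by simp
    have e: "(BCZ_q q ^^ Suc k) (a, b) = BCZ_q q (c, d)" using cd by simp
    have "mat_img (g_mat (fst (BCZ_q q (c, d))) (snd (BCZ_q q (c, d)))) (Lambda_q q)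
       = mat_img (h_mat ?R) (mat_img (h_mat \<sigma> ** g_mat a b) (Lambda_q q))"
      using st eqc by (simp add: mat_img_mult)
    also have "\<dots> = mat_img (h_mat (?R + \<sigma>) ** g_mat a b) (Lambda_q q)"
      by (simp add: mat_img_mult[symmetric] matrix_mul_assoc h_add)
    also have "?R + \<sigma> = \<tau>0" using t0 by simp
    finally show ?case unfolding e using st t0 \<sigma>(1) cardA by (intro exI[of _ \<tau>0]) auto
  qed
  have s0S: "s0 \<in> \<Sigma>"
  proof -
    have "vec2 a 0 \<in> mat_img (g_mat a b) (Lambda_q q)" using e1_in unfolding mat_img_def by (metis g_e1 image_eqI)
    then have "vec2 a 0 \<in> mat_img (h_mat s0) (mat_img (g_mat a b) (Lambda_q q))" using eq by (simp add: mat_img_mult)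
    then obtain u where u: "u \<in> mat_img (g_mat a b) (Lambda_q q)" "vec2 a 0 = h_mat s0 *v u" by (auto simp: mat_img_mem)
    obtain u1 u2 where uu: "u = vec2 u1 u2" by (metis vec2_eta)
    have "u1 = a" "u2 = s0 * a" using u(2) uu by (auto simp: h_vec vec2_eq_iff)
    then have "u \<in> S1" "u$2 / u$1 = s0" using uu a by (auto simp: S1_def)
    then show ?thesis unfolding \<Sigma>_def Sl_def using u(1) by force
  qed
  define N where "N = card (A s0)"
  have "s0 \<in> A s0" using s0S s0 unfolding A_def by simp
  then have N1: "1 \<le> N" unfolding N_def using finA[of s0] by (metis One_nat_def Suc_leI card_gt_0_iff empty_iff)
  obtain \<sigma> where \<sigma>: "0 \<le> \<sigma>" "(BCZ_q q ^^ N) (a, b) \<in> farey_tri q"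
      "mat_img (g_mat (fst ((BCZ_q q ^^ N) (a, b))) (snd ((BCZ_q q ^^ N) (a, b)))) (Lambda_q q) = mat_img (h_mat \<sigma> ** g_mat a b) (Lambda_q q)"
      "card (A \<sigma>) = N" "0 < \<sigma> \<longrightarrow> \<sigma> \<in> \<Sigma>" using inv[of N] by blast
  have "\<sigma> = s0"
  proof (rule ccontr)
    assume ne: "\<sigma> \<noteq> s0"
    show False
    proof (cases "\<sigma> < s0")
      case True
      have sub: "A \<sigma> \<subseteq> A s0" using True unfolding A_def by auto
      have "s0 \<notin> A \<sigma>" using True unfolding A_def by auto
      then have "A \<sigma> \<subset> A s0" using sub \<open>s0 \<in> A s0\<close> by blast
      then have "card (A \<sigma>) < card (A s0)" by (rule psubset_card_mono[OF finA])
      then show False using \<sigma>(4) unfolding N_def by simp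
    next
      case False
      then have gt: "s0 < \<sigma>" using ne by simp
      then have "\<sigma> \<in> \<Sigma>" using \<sigma>(5) s0 by simp
      then have inS: "\<sigma> \<in> A \<sigma>" using gt s0 unfolding A_def by simp
      have sub: "A s0 \<subseteq> A \<sigma>" using gt unfolding A_def by auto
      have "\<sigma> \<notin> A s0" using gt unfolding A_def by auto
      then have "A s0 \<subset> A \<sigma>" using sub inS by blast
      then have "card (A s0) < card (A \<sigma>)" by (rule psubset_card_mono[OF finA])
      then show False using \<sigma>(4) unfolding N_def by simp
    qed
  qed
  then have "mat_img (g_mat (fst ((BCZ_q q ^^ N) (a, b))) (snd ((BCZ_q q ^^ N) (a, b)))) (Lambda_q q) = mat_img (g_mat a b) (Lambda_q q)"
    using \<sigma>(3) eq by simp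
  moreover have "(fst ((BCZ_q q ^^ N) (a, b)), snd ((BCZ_q q ^^ N) (a, b))) \<in> farey_tri q" using \<sigma>(2) by simp
  ultimately have "fst ((BCZ_q q ^^ N) (a, b)) = a \<and> snd ((BCZ_q q ^^ N) (a, b)) = b"
    using tri_unique[OF q3 _ ab] by blast
  then have "(BCZ_q q ^^ N) (a, b) = (a, b)" by (simp add: prod_eq_iff)
  then show ?thesis using N1 by blast
qed

end

theorem mainTheorem7:
  fixes q :: nat and a b :: real
  assumes "q \<ge> 3" and "(a, b) \<in> farey_tri q"
  shows "((\<exists>n::nat. n \<ge> 1 \<and> (BCZ_q q ^^ n) (a, b) = (a, b))
          \<longleftrightarrow> (\<exists>s0 > 0. mat_img (h_mat s0 ** g_mat a b) (Lambda_q q) = mat_img (g_mat a b) (Lambda_q q)))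
       \<and> ((\<exists>s0 > 0. mat_img (h_mat s0 ** g_mat a b) (Lambda_q q) = mat_img (g_mat a b) (Lambda_q q))
          \<longleftrightarrow> (\<exists>v \<in> Lambda_q q. v$2 \<noteq> 0 \<and> b / a = v$1 / v$2))"
  using one_imp_two[OF assms(1,2)] two_imp_one[OF assms(1,2)] two_imp_three[OF assms(1,2)]
    three_imp_two[OF assms(1,2)] by blast

end
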